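(* Let $Q$ be a closed polyhedral partially ordered abelian group, $\tau$ a face of $Q_+$, and $M$ a $Q$-module. Then $M$ is $\tau$-coprimary if and only if every nonzero homogeneous element of $M$ divides a $\tau$-coprimary element, where $y\in M_q$ divides $y'\in M_{q'}$ if $q\preceq q'$ and the structure map $M_q\to M_{q'}$ sends $y$ to $y'$.
   Context: A partially ordered abelian group is an abelian group $Q$ generated by a submonoid $Q_+$ whose only unit is $0$; $q\preceq q'$ iff $q'-q\in Q_+$. A face is a submonoid $\sigma\subseteq Q_+$ with $Q_+\setminus\sigma$ an ideal of $Q_+$; $Q$ is polyhedral if it has finitely many faces. A ray is a face that is totally ordered by $\preceq$. $Q$ is closed if for each face $\tau$, the set $Q_+\setminus\tau$ equals $\bigcup_{\rho}(\rho\setminus\{0\})+Q_+$, the union over rays $\rho\not\subseteq\tau$. A $Q$-module is a $Q$-graded vector space $M=\bigoplus_q M_q$ over a field $k$ with compatible structure maps $M_q\to M_{q'}$ for $q\preceq q'$ (equivalently a $Q$-graded $k[Q_+]$-module). For a face $\tau$, $M_\tau=M\otimes_{k[Q_+]}k[Q_++\mathbb Z\tau]$ ($\mathbb Z\tau$ the subgroup generated by $\tau$), with natural map $M\to M_\tau$; $\Gamma_\tau M=\bigcap_{\tau'\not\subseteq\tau}\ker(M\to M_{\tau'})$ over faces $\tau'\not\subseteq\tau$. $M$ is $\tau$-coprimary if $M\to M_\tau$ is injective and $\Gamma_\tau(M_\tau)$ is an essential submodule of $M_\tau$ (meets every nonzero submodule nontrivially). A homogeneous $y\in M_q$ is $\tau$-persistent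 if its image in $M_{q'}$ is nonzero for all $q'\in q+\tau$; it is $\bar\tau$-transient if for each $f\in Q_+\setminus\tau$ the image of $y$ in $M_{q+\lambda f}$ vanishes for all sufficiently large integers $\lambda$; it is $\tau$-coprimary if it is both. *)

theory Defs
  imports "HOL-Algebra.Module" "HOL-Algebra.Ring"
begin

text \<open>The group Q is the type 'q (an abelian group); the positive cone Q_+ is the set P.\<close>

definition pleq :: "'q::ab_group_add set \<Rightarrow> 'q \<Rightarrow> 'q \<Rightarrow> bool" where
  "pleq P q q' \<longleftrightarrow> q' - q \<in> P"

definition submonoid :: "'q::ab_group_add set \<Rightarrow> bool" where
  "submonoid S \<longleftrightarrow> 0 \<in> S \<and> (\<forall>a\<in>S. \<forall>b\<in>S. a + b \<in> S)"

definition pogroup :: "'q::ab_group_add set \<Rightarrow> bool" where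
  "pogroup P \<longleftrightarrow> submonoid P
     \<and> (\<forall>a\<in>P. - a \<in> P \<longrightarrow> a = 0)
     \<and> (\<forall>x::'q. \<exists>a\<in>P. \<exists>b\<in>P. x = a - b)"

definition face :: "'q::ab_group_add set \<Rightarrow> 'q set \<Rightarrow> bool" where
  "face P \<sigma> \<longleftrightarrow> \<sigma> \<subseteq> P \<and> submonoid \<sigma>
     \<and> (\<forall>a\<in>P - \<sigma>. \<forall>b\<in>P. a + b \<in> P - \<sigma>)"

definition polyhedral :: "'q::ab_group_add set \<Rightarrow> bool" where
  "polyhedral P \<longleftrightarrow> finite {\<sigma>. face P \<sigma>}"

definition ray :: "'q::ab_group_add set \<Rightarrow> 'q set \<Rightarrow> bool" where
  "ray P \<rho> \<longleftrightarrow> face P \<rho> \<and> (\<forall>a\<in>\<rho>. \<forall>b\<in>\<rho>. pleq P a b \<or> pleq P b a)"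

definition closed_pog :: "'q::ab_group_add set \<Rightarrow> bool" where
  "closed_pog P \<longleftrightarrow> (\<forall>\<tau>. face P \<tau> \<longrightarrow>
     P - \<tau> = (\<Union>\<rho>\<in>{\<rho>. ray P \<rho> \<and> \<not> \<rho> \<subseteq> \<tau>}. {a + b |a b. a \<in> \<rho> - {0} \<and> b \<in> P}))"

text \<open>A Q-module over the field K: a family of K-vector spaces (HOL-Algebra modules) indexed by
  degrees, together with structure maps M_q \<rightarrow> M_q' for q \<preceq> q'.\<close>

record ('q, 'k, 'v) qmodule =
  comp :: "'q \<Rightarrow> ('k, 'v) module"
  smap :: "'q \<Rightarrow> 'q \<Rightarrow> 'v \<Rightarrow> 'v"

definition klinear :: "('k, 'z) ring_scheme \<Rightarrow> ('k, 'v, 'a) module_scheme \<Rightarrow> ('k, 'w, 'b) module_scheme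
     \<Rightarrow> ('v \<Rightarrow> 'w) \<Rightarrow> bool" where
  "klinear K V W f \<longleftrightarrow> (\<forall>x\<in>carrier V. f x \<in> carrier W)
     \<and> (\<forall>x\<in>carrier V. \<forall>y\<in>carrier V. f (x \<oplus>\<^bsub>V\<^esub> y) = f x \<oplus>\<^bsub>W\<^esub> f y)
     \<and> (\<forall>c\<in>carrier K. \<forall>x\<in>carrier V. f (c \<odot>\<^bsub>V\<^esub> x) = c \<odot>\<^bsub>W\<^esub> f x)"

definition is_qmodule :: "'q::ab_group_add set \<Rightarrow> ('k, 'z) ring_scheme \<Rightarrow> ('q, 'k, 'v, 'e) qmodule_scheme \<Rightarrow> bool" where
  "is_qmodule P K M \<longleftrightarrow>
     (\<forall>q. module K (comp M q))
     \<and> (\<forall>q q'. pleq P q q' \<longrightarrow> klinear K (comp M q) (comp M q') (smap M q q'))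
     \<and> (\<forall>q. \<forall>y\<in>carrier (comp M q). smap M q q y = y)
     \<and> (\<forall>q q' q''. pleq P q q' \<longrightarrow> pleq P q' q'' \<longrightarrow>
          (\<forall>y\<in>carrier (comp M q). smap M q' q'' (smap M q q' y) = smap M q q'' y))"

definition graded_submodule :: "'q::ab_group_add set \<Rightarrow> ('k, 'z) ring_scheme
     \<Rightarrow> ('q, 'k, 'v, 'e) qmodule_scheme \<Rightarrow> ('q \<Rightarrow> 'v set) \<Rightarrow> bool" where
  "graded_submodule P K M N \<longleftrightarrow> (\<forall>q. submodule (N q) K (comp M q))
     \<and> (\<forall>q q'. pleq P q q' \<longrightarrow> (\<forall>y\<in>N q. smap M q q' y \<in> N q'))"

definition essential :: "'q::ab_group_add set \<Rightarrow> ('k, 'z) ring_scheme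
     \<Rightarrow> ('q, 'k, 'v, 'e) qmodule_scheme \<Rightarrow> ('q \<Rightarrow> 'v set) \<Rightarrow> bool" where
  "essential P K M N \<longleftrightarrow> graded_submodule P K M N \<and>
     (\<forall>T. graded_submodule P K M T \<and> (\<exists>q. \<exists>y\<in>T q. y \<noteq> \<zero>\<^bsub>comp M q\<^esub>)
        \<longrightarrow> (\<exists>q. \<exists>y\<in>T q \<inter> N q. y \<noteq> \<zero>\<^bsub>comp M q\<^esub>))"

text \<open>M_\<tau> = M \<otimes> k[Q_+ + Z\<tau>] is realized concretely as the localization of M inverting the
  monomials x^f, f \<in> \<tau>: its degree-q part consists of fractions m / x^f with f \<in> \<tau> and
  m \<in> M_(q+f), where m/x^f = n/x^g iff x^(g+h) m = x^(f+h) n for some h \<in> \<tau>.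
  Fractions are represented by their equivalence classes (sets of pairs).\<close>

definition frac_rel :: "'q::ab_group_add set \<Rightarrow> ('q, 'k, 'v, 'e) qmodule_scheme \<Rightarrow> 'q
     \<Rightarrow> (('q \<times> 'v) \<times> ('q \<times> 'v)) set" where
  "frac_rel \<tau> M q = {((f, m), (g, n)). f \<in> \<tau> \<and> g \<in> \<tau> \<and> m \<in> carrier (comp M (q + f))
       \<and> n \<in> carrier (comp M (q + g))
       \<and> (\<exists>h\<in>\<tau>. smap M (q + f) (q + f + g + h) m = smap M (q + g) (q + f + g + h) n)}"

definition frac :: "'q::ab_group_add set \<Rightarrow> ('q, 'k, 'v, 'e) qmodule_scheme \<Rightarrow> 'q
     \<Rightarrow> 'q \<Rightarrow> 'v \<Rightarrow> ('q \<times> 'v) set" where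
  "frac \<tau> M q f m = frac_rel \<tau> M q `` {(f, m)}"

definition loc_comp :: "'q::ab_group_add set \<Rightarrow> ('q, 'k, 'v, 'e) qmodule_scheme \<Rightarrow> 'q
     \<Rightarrow> ('k, ('q \<times> 'v) set) module" where
  "loc_comp \<tau> M q =
     \<lparr> carrier = {frac \<tau> M q f m |f m. f \<in> \<tau> \<and> m \<in> carrier (comp M (q + f))},
       mult = (\<lambda>_ _. undefined), one = undefined,
       zero = frac \<tau> M q 0 \<zero>\<^bsub>comp M (q + 0)\<^esub>,
       add = (\<lambda>A B. \<Union>{frac \<tau> M q (f + g)
                  (smap M (q + f) (q + (f + g)) m \<oplus>\<^bsub>comp M (q + (f + g))\<^esub> smap M (q + g) (q + (f + g)) n)
                  |f m g n. (f, m) \<in> A \<and> (g, n) \<in> B}),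
       smult = (\<lambda>c A. \<Union>{frac \<tau> M q f (c \<odot>\<^bsub>comp M (q + f)\<^esub> m) |f m. (f, m) \<in> A}) \<rparr>"

definition loc :: "'q::ab_group_add set \<Rightarrow> ('q, 'k, 'v, 'e) qmodule_scheme
     \<Rightarrow> ('q, 'k, ('q \<times> 'v) set) qmodule" where
  "loc \<tau> M = \<lparr> comp = loc_comp \<tau> M,
       smap = (\<lambda>q q' A. \<Union>{frac \<tau> M q' f (smap M (q + f) (q' + f) m) |f m. (f, m) \<in> A}) \<rparr>"

definition locmap :: "'q::ab_group_add set \<Rightarrow> ('q, 'k, 'v, 'e) qmodule_scheme \<Rightarrow> 'q
     \<Rightarrow> 'v \<Rightarrow> ('q \<times> 'v) set" where
  "locmap \<tau> M q m = frac \<tau> M q 0 (smap M q (q + 0) m)"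

definition Gamma :: "'q::ab_group_add set \<Rightarrow> 'q set \<Rightarrow> ('q, 'k, 'v, 'e) qmodule_scheme
     \<Rightarrow> 'q \<Rightarrow> 'v set" where
  "Gamma P \<tau> M q = {y \<in> carrier (comp M q). \<forall>\<tau>'. face P \<tau>' \<and> \<not> \<tau>' \<subseteq> \<tau> \<longrightarrow>
       locmap \<tau>' M q y = \<zero>\<^bsub>comp (loc \<tau>' M) q\<^esub>}"

definition coprimary_module :: "'q::ab_group_add set \<Rightarrow> ('k, 'z) ring_scheme \<Rightarrow> 'q set
     \<Rightarrow> ('q, 'k, 'v, 'e) qmodule_scheme \<Rightarrow> bool" where
  "coprimary_module P K \<tau> M \<longleftrightarrow>
     (\<forall>q. inj_on (locmap \<tau> M q) (carrier (comp M q)))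
     \<and> essential P K (loc \<tau> M) (Gamma P \<tau> (loc \<tau> M))"

fun ntimes :: "nat \<Rightarrow> 'a::monoid_add \<Rightarrow> 'a" where
  "ntimes 0 f = 0"
| "ntimes (Suc n) f = f + ntimes n f"

definition persistent :: "'q::ab_group_add set \<Rightarrow> ('q, 'k, 'v, 'e) qmodule_scheme \<Rightarrow> 'q \<Rightarrow> 'v \<Rightarrow> bool" where
  "persistent \<tau> M q y \<longleftrightarrow> (\<forall>f\<in>\<tau>. smap M q (q + f) y \<noteq> \<zero>\<^bsub>comp M (q + f)\<^esub>)"

definition transient :: "'q::ab_group_add set \<Rightarrow> 'q set \<Rightarrow> ('q, 'k, 'v, 'e) qmodule_scheme \<Rightarrow> 'q \<Rightarrow> 'v \<Rightarrow> bool" where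
  "transient P \<tau> M q y \<longleftrightarrow> (\<forall>f\<in>P - \<tau>. \<exists>N. \<forall>n\<ge>N.
       smap M q (q + ntimes n f) y = \<zero>\<^bsub>comp M (q + ntimes n f)\<^esub>)"

definition coprimary_elem :: "'q::ab_group_add set \<Rightarrow> 'q set \<Rightarrow> ('q, 'k, 'v, 'e) qmodule_scheme \<Rightarrow> 'q \<Rightarrow> 'v \<Rightarrow> bool" where
  "coprimary_elem P \<tau> M q y \<longleftrightarrow> y \<in> carrier (comp M q) \<and> persistent \<tau> M q y \<and> transient P \<tau> M q y"

definition divides :: "'q::ab_group_add set \<Rightarrow> ('q, 'k, 'v, 'e) qmodule_scheme \<Rightarrow> 'q \<Rightarrow> 'v \<Rightarrow> 'q \<Rightarrow> 'v \<Rightarrow> bool" where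
  "divides P M q y q' y' \<longleftrightarrow> pleq P q q' \<and> y \<in> carrier (comp M q) \<and> y' \<in> carrier (comp M q')
     \<and> smap M q q' y = y'"

end

theory Submission
  imports Defs
begin

locale qctx =
  fixes P :: "'q::ab_group_add set" and K :: "('k, 'z) ring_scheme"
    and M :: "('q, 'k, 'v, 'e) qmodule_scheme" and \<tau> :: "'q set"
  assumes pog: "pogroup P" and fld: "field K" and qm: "is_qmodule P K M"
    and fc: "face P \<tau>"
begin

lemma P0: "0 \<in> P" using pog unfolding pogroup_def submonoid_def by auto
lemma Padd: "a \<in> P \<Longrightarrow> b \<in> P \<Longrightarrow> a + b \<in> P" using pog unfolding pogroup_def submonoid_def by auto
lemma tP: "a \<in> \<tau> \<Longrightarrow> a \<in> P" using fc unfolding face_def by auto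
lemma t0: "0 \<in> \<tau>" using fc unfolding face_def submonoid_def by auto
lemma tadd: "a \<in> \<tau> \<Longrightarrow> b \<in> \<tau> \<Longrightarrow> a + b \<in> \<tau>" using fc unfolding face_def submonoid_def by auto

lemma pleqI: "b - a \<in> P \<Longrightarrow> pleq P a b" by (simp add: pleq_def)
lemma pleq_refl: "pleq P a a" by (simp add: pleq_def P0)
lemma pleq_trans: "pleq P a b \<Longrightarrow> pleq P b c \<Longrightarrow> pleq P a c"
  unfolding pleq_def using Padd[of "c - b" "b - a"] by (simp add: algebra_simps)
lemma pleq_add: "d \<in> P \<Longrightarrow> pleq P a (a + d)" by (simp add: pleq_def)
lemma pleq_addt: "d \<in> \<tau> \<Longrightarrow> pleq P a (a + d)" by (simp add: pleq_def tP)
lemma pleq_mono: "pleq P a b \<Longrightarrow> pleq P (a + d) (b + d)" by (simp add: pleq_def)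

lemma mods: "module K (comp M q)" using qm unfolding is_qmodule_def by auto
lemma sm_lin: "pleq P a b \<Longrightarrow> klinear K (comp M a) (comp M b) (smap M a b)"
  using qm unfolding is_qmodule_def by auto
lemma sm_closed: "pleq P a b \<Longrightarrow> x \<in> carrier (comp M a) \<Longrightarrow> smap M a b x \<in> carrier (comp M b)"
  using sm_lin unfolding klinear_def by auto
lemma sm_add: "pleq P a b \<Longrightarrow> x \<in> carrier (comp M a) \<Longrightarrow> y \<in> carrier (comp M a) \<Longrightarrow>
   smap M a b (x \<oplus>\<^bsub>comp M a\<^esub> y) = smap M a b x \<oplus>\<^bsub>comp M b\<^esub> smap M a b y"
  using sm_lin unfolding klinear_def by auto
lemma sm_smult: "pleq P a b \<Longrightarrow> c \<in> carrier K \<Longrightarrow> x \<in> carrier (comp M a) \<Longrightarrow>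
   smap M a b (c \<odot>\<^bsub>comp M a\<^esub> x) = c \<odot>\<^bsub>comp M b\<^esub> smap M a b x"
  using sm_lin unfolding klinear_def by auto
lemma sm_id: "x \<in> carrier (comp M a) \<Longrightarrow> smap M a a x = x"
  using qm unfolding is_qmodule_def by auto
lemma sm_comp: "pleq P a b \<Longrightarrow> pleq P b c \<Longrightarrow> x \<in> carrier (comp M a) \<Longrightarrow>
   smap M b c (smap M a b x) = smap M a c x"
  using qm unfolding is_qmodule_def by blast
lemma sm_zero: "pleq P a b \<Longrightarrow> smap M a b \<zero>\<^bsub>comp M a\<^esub> = \<zero>\<^bsub>comp M b\<^esub>"
proof -
  assume ab: "pleq P a b"
  interpret A: module K "comp M a" by (rule mods)
  interpret B: module K "comp M b" by (rule mods)
  have "smap M a b \<zero>\<^bsub>comp M a\<^esub> = smap M a b (\<zero>\<^bsub>K\<^esub> \<odot>\<^bsub>comp M a\<^esub> \<zero>\<^bsub>comp M a\<^esub>)" by simp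
  also have "\<dots> = \<zero>\<^bsub>K\<^esub> \<odot>\<^bsub>comp M b\<^esub> smap M a b \<zero>\<^bsub>comp M a\<^esub>" by (rule sm_smult[OF ab]) auto
  also have "\<dots> = \<zero>\<^bsub>comp M b\<^esub>" using sm_closed ab by simp
  finally show ?thesis .
qed
lemma sm_neg: "pleq P a b \<Longrightarrow> x \<in> carrier (comp M a) \<Longrightarrow>
   smap M a b (\<ominus>\<^bsub>comp M a\<^esub> x) = \<ominus>\<^bsub>comp M b\<^esub> smap M a b x"
proof -
  assume ab: "pleq P a b" and x: "x \<in> carrier (comp M a)"
  interpret A: module K "comp M a" by (rule mods)
  interpret B: module K "comp M b" by (rule mods)
  have "\<ominus>\<^bsub>comp M a\<^esub> x = (\<ominus>\<^bsub>K\<^esub> \<one>\<^bsub>K\<^esub>) \<odot>\<^bsub>comp M a\<^esub> x" using A.smult_l_minus[of "\<one>\<^bsub>K\<^esub>" x] x by simp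
  hence "smap M a b (\<ominus>\<^bsub>comp M a\<^esub> x) = (\<ominus>\<^bsub>K\<^esub> \<one>\<^bsub>K\<^esub>) \<odot>\<^bsub>comp M b\<^esub> smap M a b x"
    using sm_smult ab x by simp
  also have "\<dots> = \<ominus>\<^bsub>comp M b\<^esub> smap M a b x" using B.smult_l_minus[of "\<one>\<^bsub>K\<^esub>"] sm_closed ab x by simp
  finally show ?thesis .
qed

abbreviation "Cr q \<equiv> carrier (comp M q)"
abbreviation "rel q \<equiv> frac_rel \<tau> M q"

lemma rel_iff: "((f,m),(g,n)) \<in> rel q \<longleftrightarrow> f \<in> \<tau> \<and> g \<in> \<tau> \<and> m \<in> Cr (q+f) \<and> n \<in> Cr (q+g)
   \<and> (\<exists>D. D - (q+f+g) \<in> \<tau> \<and> smap M (q+f) D m = smap M (q+g) D n)"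
proof
  assume "((f,m),(g,n)) \<in> rel q"
  then obtain h where "f \<in> \<tau>" "g \<in> \<tau>" "m \<in> Cr (q+f)" "n \<in> Cr (q+g)" "h \<in> \<tau>"
    "smap M (q + f) (q + f + g + h) m = smap M (q + g) (q + f + g + h) n"
    unfolding frac_rel_def by auto
  then show "f \<in> \<tau> \<and> g \<in> \<tau> \<and> m \<in> Cr (q+f) \<and> n \<in> Cr (q+g)
   \<and> (\<exists>D. D - (q+f+g) \<in> \<tau> \<and> smap M (q+f) D m = smap M (q+g) D n)"
    by (intro conjI exI[of _ "q + f + g + h"]) auto
next
  assume "f \<in> \<tau> \<and> g \<in> \<tau> \<and> m \<in> Cr (q+f) \<and> n \<in> Cr (q+g)
   \<and> (\<exists>D. D - (q+f+g) \<in> \<tau> \<and> smap M (q+f) D m = smap M (q+g) D n)"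
  then obtain D where "f \<in> \<tau>" "g \<in> \<tau>" "m \<in> Cr (q+f)" "n \<in> Cr (q+g)" "D - (q+f+g) \<in> \<tau>"
    "smap M (q+f) D m = smap M (q+g) D n" by auto
  moreover have "q + f + g + (D - (q+f+g)) = D" by simp
  ultimately show "((f,m),(g,n)) \<in> rel q"
    unfolding frac_rel_def by (auto intro!: bexI[of _ "D - (q+f+g)"])
qed

lemma Dpleq: "D - (q+f+g) \<in> \<tau> \<Longrightarrow> f \<in> \<tau> \<Longrightarrow> g \<in> \<tau> \<Longrightarrow> pleq P (q+f) D \<and> pleq P (q+g) D"
proof -
  assume a: "D - (q+f+g) \<in> \<tau>" "f \<in> \<tau>" "g \<in> \<tau>"
  have "D - (q+f) = (D - (q+f+g)) + g" "D - (q+g) = (D - (q+f+g)) + f" by (simp_all add: algebra_simps)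
  then show ?thesis using a tadd tP unfolding pleq_def by metis
qed

lemma push: "x \<in> Cr a \<Longrightarrow> x' \<in> Cr a' \<Longrightarrow> pleq P a D \<Longrightarrow> pleq P a' D \<Longrightarrow>
  smap M a D x = smap M a' D x' \<Longrightarrow> pleq P D D' \<Longrightarrow> smap M a D' x = smap M a' D' x'"
  by (metis sm_comp)

lemma rel_refl: "f \<in> \<tau> \<Longrightarrow> m \<in> Cr (q+f) \<Longrightarrow> ((f,m),(f,m)) \<in> rel q"
  unfolding rel_iff by (auto intro!: exI[of _ "q+f+f"] t0)

lemma rel_sym: "((f,m),(g,n)) \<in> rel q \<Longrightarrow> ((g,n),(f,m)) \<in> rel q"
  unfolding rel_iff by (metis add.assoc add.commute)

lemma rel_trans: assumes "((f,m),(g,n)) \<in> rel q" "((g,n),(k,p)) \<in> rel q"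
  shows "((f,m),(k,p)) \<in> rel q"
proof -
  obtain D1 where 1: "f \<in> \<tau>" "g \<in> \<tau>" "m \<in> Cr (q+f)" "n \<in> Cr (q+g)" "D1 - (q+f+g) \<in> \<tau>"
    "smap M (q+f) D1 m = smap M (q+g) D1 n" using assms(1) unfolding rel_iff by auto
  obtain D2 where 2: "k \<in> \<tau>" "p \<in> Cr (q+k)" "D2 - (q+g+k) \<in> \<tau>"
    "smap M (q+g) D2 n = smap M (q+k) D2 p" using assms(2) unfolding rel_iff by auto
  define D where "D = D1 + D2 - q - g"
  have e1: "D - (q+f+k) = (D1 - (q+f+g)) + (D2 - (q+g+k)) + g" unfolding D_def by (simp add: algebra_simps)
  have e2: "D - D1 = (D2 - (q+g+k)) + k" unfolding D_def by (simp add: algebra_simps)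
  have e3: "D - D2 = (D1 - (q+f+g)) + f" unfolding D_def by (simp add: algebra_simps)
  have t: "D - (q+f+k) \<in> \<tau>" using e1 1 2 tadd by metis
  have p1: "pleq P D1 D" "pleq P D2 D" using e2 e3 1 2 tadd tP unfolding pleq_def by metis+
  have a1: "smap M (q+f) D m = smap M (q+g) D n"
    by (rule push[OF 1(3,4) _ _ 1(6) p1(1)]) (use Dpleq[OF 1(5,1,2)] in auto)
  have a2: "smap M (q+g) D n = smap M (q+k) D p"
    by (rule push[OF 1(4) 2(2) _ _ 2(4) p1(2)]) (use Dpleq[OF 2(3) 1(2) 2(1)] in auto)
  show ?thesis unfolding rel_iff using 1 2 t a1 a2 by auto
qed

lemma frac_mem: "X \<in> frac \<tau> M q f m \<longleftrightarrow> ((f,m),X) \<in> rel q"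
  unfolding frac_def by auto

lemma frac_eq_iff: "f \<in> \<tau> \<Longrightarrow> m \<in> Cr (q+f) \<Longrightarrow> g \<in> \<tau> \<Longrightarrow> n \<in> Cr (q+g) \<Longrightarrow>
   frac \<tau> M q f m = frac \<tau> M q g n \<longleftrightarrow> ((f,m),(g,n)) \<in> rel q"
proof
  assume "f \<in> \<tau>" "m \<in> Cr (q+f)" "g \<in> \<tau>" "n \<in> Cr (q+g)" "frac \<tau> M q f m = frac \<tau> M q g n"
  then show "((f,m),(g,n)) \<in> rel q" using rel_refl[of g n q] frac_mem by metis
next
  assume r: "((f,m),(g,n)) \<in> rel q"
  show "frac \<tau> M q f m = frac \<tau> M q g n"
  proof (rule Set.set_eqI)
    fix X show "X \<in> frac \<tau> M q f m \<longleftrightarrow> X \<in> frac \<tau> M q g n"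
    proof (cases X)
      case (Pair a b)
      show ?thesis unfolding frac_mem Pair using r rel_sym rel_trans by meson
    qed
  qed
qed

lemma frac_of_mem: "((f,m),(f',m')) \<in> rel q \<Longrightarrow> frac \<tau> M q f' m' = frac \<tau> M q f m"
  using frac_eq_iff rel_sym unfolding rel_iff by (metis rel_iff)

lemma loc_carrier: "carrier (comp (loc \<tau> M) q) = {frac \<tau> M q f m |f m. f \<in> \<tau> \<and> m \<in> Cr (q + f)}"
  unfolding loc_def loc_comp_def by simp

lemma loc_zero: "\<zero>\<^bsub>comp (loc \<tau> M) q\<^esub> = frac \<tau> M q 0 \<zero>\<^bsub>comp M q\<^esub>"
  unfolding loc_def loc_comp_def by simp



lemma rel_valid: "((f,m),(g,n)) \<in> rel q \<Longrightarrow> g \<in> \<tau> \<and> n \<in> Cr (q+g)"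
  unfolding rel_iff by blast

lemma Union_const: "(\<And>x. x \<in> S \<Longrightarrow> x = c) \<Longrightarrow> c \<in> S \<Longrightarrow> \<Union>S = c" by blast

lemma tPle: "x \<in> \<tau> \<Longrightarrow> b - a = x \<Longrightarrow> pleq P a b" unfolding pleq_def using tP by metis

abbreviation "Sadd q f m g n \<equiv> smap M (q+f) (q+(f+g)) m \<oplus>\<^bsub>comp M (q+(f+g))\<^esub> smap M (q+g) (q+(f+g)) n"

lemma Sadd_closed: "f \<in> \<tau> \<Longrightarrow> g \<in> \<tau> \<Longrightarrow> m \<in> Cr (q+f) \<Longrightarrow> n \<in> Cr (q+g) \<Longrightarrow> Sadd q f m g n \<in> Cr (q+(f+g))"
proof -
  assume a: "f \<in> \<tau>" "g \<in> \<tau>" "m \<in> Cr (q+f)" "n \<in> Cr (q+g)"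
  interpret A: module K "comp M (q+(f+g))" by (rule mods)
  have "pleq P (q+f) (q+(f+g))" "pleq P (q+g) (q+(f+g))" using a pleq_addt[of g "q+f"] pleq_addt[of f "q+g"] by (simp_all add: add_ac)
  then show ?thesis using a sm_closed A.add.m_closed by blast
qed

lemma Sadd_at: "f \<in> \<tau> \<Longrightarrow> g \<in> \<tau> \<Longrightarrow> m \<in> Cr (q+f) \<Longrightarrow> n \<in> Cr (q+g) \<Longrightarrow> pleq P (q+(f+g)) D \<Longrightarrow>
   smap M (q+(f+g)) D (Sadd q f m g n) = smap M (q+f) D m \<oplus>\<^bsub>comp M D\<^esub> smap M (q+g) D n"
proof -
  assume a: "f \<in> \<tau>" "g \<in> \<tau>" "m \<in> Cr (q+f)" "n \<in> Cr (q+g)" "pleq P (q+(f+g)) D"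
  have p: "pleq P (q+f) (q+(f+g))" "pleq P (q+g) (q+(f+g))" using a pleq_addt[of g "q+f"] pleq_addt[of f "q+g"] by (simp_all add: add_ac)
  then show ?thesis using a sm_closed[OF p(1)] sm_closed[OF p(2)] sm_add[OF a(5)] sm_comp[OF p(1) a(5)] sm_comp[OF p(2) a(5)] by simp
qed


lemma loc_add: assumes a: "f \<in> \<tau>" "m \<in> Cr (q+f)" "g \<in> \<tau>" "n \<in> Cr (q+g)"
  shows "frac \<tau> M q f m \<oplus>\<^bsub>comp (loc \<tau> M) q\<^esub> frac \<tau> M q g n = frac \<tau> M q (f+g) (Sadd q f m g n)"
proof -
  have key: "frac \<tau> M q (f'+g') (Sadd q f' m' g' n') = frac \<tau> M q (f+g) (Sadd q f m g n)"
    if r1: "((f,m),(f',m')) \<in> rel q" and r2: "((g,n),(g',n')) \<in> rel q" for f' m' g' n'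
  proof -
    obtain D1 where 1: "f' \<in> \<tau>" "m' \<in> Cr (q+f')" "D1 - (q+f+f') \<in> \<tau>"
      "smap M (q+f) D1 m = smap M (q+f') D1 m'" using r1 unfolding rel_iff by auto
    obtain D2 where 2: "g' \<in> \<tau>" "n' \<in> Cr (q+g')" "D2 - (q+g+g') \<in> \<tau>"
      "smap M (q+g) D2 n = smap M (q+g') D2 n'" using r2 unfolding rel_iff by auto
    define D where "D = D1 + D2 - q"
    have e0: "D - (q + (f+g) + (f'+g')) = (D1 - (q+f+f')) + (D2 - (q+g+g'))" unfolding D_def by (simp add: algebra_simps)
    have e1: "D - D1 = (D2 - (q+g+g')) + (g + g')" unfolding D_def by (simp add: algebra_simps)
    have e2: "D - D2 = (D1 - (q+f+f')) + (f + f')" unfolding D_def by (simp add: algebra_simps)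
    have t: "D - (q + (f+g) + (f'+g')) \<in> \<tau>" using e0 1 2 tadd by metis
    have pD1: "pleq P D1 D" using e1 1 2 a tadd by (metis tPle)
    have pD2: "pleq P D2 D" using e2 1 2 a tadd by (metis tPle)
    have pp: "pleq P (q+(f+g)) D \<and> pleq P (q+(f'+g')) D" using Dpleq[of D q "f+g" "f'+g'"] t a 1 2 tadd
      by (simp add: add.assoc)
    have em: "smap M (q+f) D m = smap M (q+f') D m'"
      by (rule push[OF a(2) 1(2) _ _ 1(4) pD1]) (use Dpleq[OF 1(3) a(1) 1(1)] in auto)
    have en: "smap M (q+g) D n = smap M (q+g') D n'"
      by (rule push[OF a(4) 2(2) _ _ 2(4) pD2]) (use Dpleq[OF 2(3) a(3) 2(1)] in auto)
    have "((f+g, Sadd q f m g n),(f'+g', Sadd q f' m' g' n')) \<in> rel q"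

    proof -
      have "smap M (q+(f+g)) D (Sadd q f m g n) = smap M (q+(f'+g')) D (Sadd q f' m' g' n')"
        using Sadd_at[OF a(1,3,2,4), of D] Sadd_at[OF 1(1) 2(1) 1(2) 2(2), of D] pp em en by argo
      moreover have "f+g \<in> \<tau>" "f'+g' \<in> \<tau>" using a 1 2 tadd by auto
      moreover have "Sadd q f m g n \<in> Cr (q+(f+g))" by (rule Sadd_closed[OF a(1,3,2,4)])
      moreover have "Sadd q f' m' g' n' \<in> Cr (q+(f'+g'))" by (rule Sadd_closed[OF 1(1) 2(1) 1(2) 2(2)])
      ultimately show ?thesis unfolding rel_iff using t by blast
    qed
    then show ?thesis using frac_of_mem by blast
  qed
  show ?thesis
    unfolding loc_def loc_comp_def
    apply simp
    apply (rule Union_const)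
    using key apply (auto simp: frac_mem)[1]
    using rel_refl a frac_mem by blast
qed



lemma loc_smult: assumes a: "f \<in> \<tau>" "m \<in> Cr (q+f)" "c \<in> carrier K"
  shows "c \<odot>\<^bsub>comp (loc \<tau> M) q\<^esub> frac \<tau> M q f m = frac \<tau> M q f (c \<odot>\<^bsub>comp M (q+f)\<^esub> m)"
proof -
  have key: "frac \<tau> M q f' (c \<odot>\<^bsub>comp M (q+f')\<^esub> m') = frac \<tau> M q f (c \<odot>\<^bsub>comp M (q+f)\<^esub> m)"
    if r1: "((f,m),(f',m')) \<in> rel q" for f' m'
  proof -
    obtain D where 1: "f' \<in> \<tau>" "m' \<in> Cr (q+f')" "D - (q+f+f') \<in> \<tau>"
      "smap M (q+f) D m = smap M (q+f') D m'" using r1 unfolding rel_iff by auto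
    interpret A: module K "comp M (q+f)" by (rule mods)
    interpret B: module K "comp M (q+f')" by (rule mods)
    have pp: "pleq P (q+f) D" "pleq P (q+f') D" using Dpleq[OF 1(3) a(1) 1(1)] by auto
    have "smap M (q+f) D (c \<odot>\<^bsub>comp M (q+f)\<^esub> m) = smap M (q+f') D (c \<odot>\<^bsub>comp M (q+f')\<^esub> m')"
      using sm_smult[OF pp(1) a(3) a(2)] sm_smult[OF pp(2) a(3) 1(2)] 1(4) by argo
    moreover have "c \<odot>\<^bsub>comp M (q+f)\<^esub> m \<in> Cr (q+f)" "c \<odot>\<^bsub>comp M (q+f')\<^esub> m' \<in> Cr (q+f')"
      using a 1 by auto
    ultimately have "((f, c \<odot>\<^bsub>comp M (q+f)\<^esub> m),(f', c \<odot>\<^bsub>comp M (q+f')\<^esub> m')) \<in> rel q"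
      unfolding rel_iff using a 1 by blast
    then show ?thesis using frac_of_mem by blast
  qed
  show ?thesis
    unfolding loc_def loc_comp_def
    apply simp
    apply (rule Union_const)
    using key apply (auto simp: frac_mem)[1]
    using rel_refl a frac_mem by blast
qed

lemma loc_smap: assumes a: "f \<in> \<tau>" "m \<in> Cr (q+f)" "pleq P q q'"
  shows "smap (loc \<tau> M) q q' (frac \<tau> M q f m) = frac \<tau> M q' f (smap M (q+f) (q'+f) m)"
proof -
  have pq: "pleq P (q+f) (q'+f)" for f using a(3) pleq_mono by blast
  have key: "frac \<tau> M q' f' (smap M (q+f') (q'+f') m') = frac \<tau> M q' f (smap M (q+f) (q'+f) m)"
    if r1: "((f,m),(f',m')) \<in> rel q" for f' m'
  proof -
    obtain D where 1: "f' \<in> \<tau>" "m' \<in> Cr (q+f')" "D - (q+f+f') \<in> \<tau>"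
      "smap M (q+f) D m = smap M (q+f') D m'" using r1 unfolding rel_iff by auto
    define D' where "D' = D + (q' - q)"
    have e: "D' - (q'+f+f') = D - (q+f+f')" unfolding D'_def by (simp add: algebra_simps)
    have pDD: "pleq P D D'" using a(3) unfolding D'_def pleq_def by simp
    have pp: "pleq P (q+f) D" "pleq P (q+f') D" using Dpleq[OF 1(3) a(1) 1(1)] by auto
    have pp': "pleq P (q'+f) D'" "pleq P (q'+f') D'" using Dpleq[of D' q' f f'] e 1 a by auto
    have "smap M (q+f) D' m = smap M (q+f') D' m'" by (rule push[OF a(2) 1(2) pp 1(4) pDD])
    moreover have "smap M (q'+f) D' (smap M (q+f) (q'+f) m) = smap M (q+f) D' m"
      by (rule sm_comp[OF pq pp'(1) a(2)])
    moreover have "smap M (q'+f') D' (smap M (q+f') (q'+f') m') = smap M (q+f') D' m'"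
      by (rule sm_comp[OF pq pp'(2) 1(2)])
    ultimately have eq: "smap M (q'+f) D' (smap M (q+f) (q'+f) m) = smap M (q'+f') D' (smap M (q+f') (q'+f') m')"
      by argo
    have c1: "smap M (q+f) (q'+f) m \<in> Cr (q'+f)" by (rule sm_closed[OF pq a(2)])
    have c2: "smap M (q+f') (q'+f') m' \<in> Cr (q'+f')" by (rule sm_closed[OF pq 1(2)])
    have "((f, smap M (q+f) (q'+f) m),(f', smap M (q+f') (q'+f') m')) \<in> rel q'"
      unfolding rel_iff using a(1) 1(1) c1 c2 e 1(3) eq by metis
    then show ?thesis using frac_of_mem by blast
  qed
  show ?thesis
    unfolding loc_def loc_comp_def
    apply simp
    apply (rule Union_const)
    using key apply (auto simp: frac_mem)[1]
    using rel_refl a frac_mem by blast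
qed


lemma zero_in: "\<zero>\<^bsub>comp M q\<^esub> \<in> Cr q"
proof -
  interpret A: module K "comp M q" by (rule mods)
  show ?thesis by simp
qed

lemma frac_zero_iff: assumes a: "f \<in> \<tau>" "m \<in> Cr (q+f)"
  shows "frac \<tau> M q f m = \<zero>\<^bsub>comp (loc \<tau> M) q\<^esub> \<longleftrightarrow> (\<exists>D. D - (q+f) \<in> \<tau> \<and> smap M (q+f) D m = \<zero>\<^bsub>comp M D\<^esub>)"
proof -
  have z: "\<zero>\<^bsub>comp M q\<^esub> \<in> Cr (q+0)" using zero_in by simp
  have "frac \<tau> M q f m = \<zero>\<^bsub>comp (loc \<tau> M) q\<^esub> \<longleftrightarrow> ((f,m),(0,\<zero>\<^bsub>comp M q\<^esub>)) \<in> rel q"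
    unfolding loc_zero using frac_eq_iff[OF a t0 z] by simp
  also have "\<dots> \<longleftrightarrow> (\<exists>D. D - (q+f) \<in> \<tau> \<and> smap M (q+f) D m = \<zero>\<^bsub>comp M D\<^esub>)"
  proof
    assume "((f,m),(0,\<zero>\<^bsub>comp M q\<^esub>)) \<in> rel q"
    then obtain D where "D - (q+f+0) \<in> \<tau>" "smap M (q+f) D m = smap M (q+0) D \<zero>\<^bsub>comp M q\<^esub>"
      unfolding rel_iff by blast
    moreover have "pleq P q D" using Dpleq[OF calculation(1) a(1) t0] by simp
    ultimately show "\<exists>D. D - (q+f) \<in> \<tau> \<and> smap M (q+f) D m = \<zero>\<^bsub>comp M D\<^esub>"
      using sm_zero by auto
  next
    assume "\<exists>D. D - (q+f) \<in> \<tau> \<and> smap M (q+f) D m = \<zero>\<^bsub>comp M D\<^esub>"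
    then obtain D where D: "D - (q+f) \<in> \<tau>" "smap M (q+f) D m = \<zero>\<^bsub>comp M D\<^esub>" by blast
    have "pleq P q D" using Dpleq[of D q f 0] D a t0 by simp
    then have "smap M (q+0) D \<zero>\<^bsub>comp M q\<^esub> = \<zero>\<^bsub>comp M D\<^esub>" using sm_zero by simp
    then show "((f,m),(0,\<zero>\<^bsub>comp M q\<^esub>)) \<in> rel q"
      unfolding rel_iff using a t0 z D by auto
  qed
  finally show ?thesis .
qed

lemma loc_carrierE: assumes "Y \<in> carrier (comp (loc \<tau> M) q)"
  obtains f m where "f \<in> \<tau>" "m \<in> Cr (q+f)" "Y = frac \<tau> M q f m"
  using assms unfolding loc_carrier by blast

lemma loc_carrierI: "f \<in> \<tau> \<Longrightarrow> m \<in> Cr (q+f) \<Longrightarrow> frac \<tau> M q f m \<in> carrier (comp (loc \<tau> M) q)"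
  unfolding loc_carrier by blast

lemma loc_inv: assumes a: "f \<in> \<tau>" "m \<in> Cr (q+f)"
  shows "m_inv (add_monoid (comp (loc \<tau> M) q)) (frac \<tau> M q f m) = frac \<tau> M q f (\<ominus>\<^bsub>comp M (q+f)\<^esub> m)"
proof -
  interpret A: module K "comp M (q+f)" by (rule mods)
  define N where "N = \<ominus>\<^bsub>comp M (q+f)\<^esub> m"
  have N: "N \<in> Cr (q+f)" unfolding N_def using a by simp
  have pf: "pleq P (q+f) (q+(f+f))" using pleq_addt[of f "q+f"] a by (simp add: add.assoc)
  interpret B: module K "comp M (q+(f+f))" by (rule mods)
  have sN: "smap M (q+f) (q+(f+f)) N = \<ominus>\<^bsub>comp M (q+(f+f))\<^esub> smap M (q+f) (q+(f+f)) m"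
    unfolding N_def by (rule sm_neg[OF pf a(2)])
  have smc: "smap M (q+f) (q+(f+f)) m \<in> Cr (q+(f+f))" by (rule sm_closed[OF pf a(2)])
  have zz: "frac \<tau> M q (f+f) \<zero>\<^bsub>comp M (q+(f+f))\<^esub> = \<zero>\<^bsub>comp (loc \<tau> M) q\<^esub>"
    unfolding frac_zero_iff[OF tadd[OF a(1) a(1)] B.zero_closed]
    using sm_id[OF B.zero_closed] by (intro exI[of _ "q+(f+f)"]) (simp add: t0)
  have s1: "frac \<tau> M q f m \<oplus>\<^bsub>comp (loc \<tau> M) q\<^esub> frac \<tau> M q f N = \<zero>\<^bsub>comp (loc \<tau> M) q\<^esub>"
    unfolding loc_add[OF a a(1) N] sN using smc zz B.r_neg B.l_neg by simp
  have s2: "frac \<tau> M q f N \<oplus>\<^bsub>comp (loc \<tau> M) q\<^esub> frac \<tau> M q f m = \<zero>\<^bsub>comp (loc \<tau> M) q\<^esub>"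
    unfolding loc_add[OF a(1) N a] sN using smc zz B.r_neg B.l_neg by simp
  have uniq: "Y = frac \<tau> M q f N" if Y: "Y \<in> carrier (comp (loc \<tau> M) q)"
     and e: "frac \<tau> M q f m \<oplus>\<^bsub>comp (loc \<tau> M) q\<^esub> Y = \<zero>\<^bsub>comp (loc \<tau> M) q\<^esub>" for Y
  proof -
    obtain g n where g: "g \<in> \<tau>" "n \<in> Cr (q+g)" "Y = frac \<tau> M q g n" using Y by (rule loc_carrierE)
    have "frac \<tau> M q (f+g) (Sadd q f m g n) = \<zero>\<^bsub>comp (loc \<tau> M) q\<^esub>"
      using e loc_add[OF a g(1,2)] g(3) by simp
    then obtain D where D: "D - (q+(f+g)) \<in> \<tau>" "smap M (q+(f+g)) D (Sadd q f m g n) = \<zero>\<^bsub>comp M D\<^esub>"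
      using frac_zero_iff[OF tadd[OF a(1) g(1)] Sadd_closed[OF a(1) g(1) a(2) g(2)]] by blast
    have pD: "pleq P (q+(f+g)) D" by (rule tPle[OF D(1)]) simp
    have Dp: "pleq P (q+f) D" "pleq P (q+g) D" using Dpleq[of D q f g] D(1) a g by (simp_all add: add.assoc)
    interpret C: module K "comp M D" by (rule mods)
    have c1: "smap M (q+f) D m \<in> Cr D" by (rule sm_closed[OF Dp(1) a(2)])
    have c2: "smap M (q+g) D n \<in> Cr D" by (rule sm_closed[OF Dp(2) g(2)])
    have "smap M (q+f) D m \<oplus>\<^bsub>comp M D\<^esub> smap M (q+g) D n = \<zero>\<^bsub>comp M D\<^esub>"
      using D(2) Sadd_at[OF a(1) g(1) a(2) g(2) pD] by simp
    then have "smap M (q+g) D n \<oplus>\<^bsub>comp M D\<^esub> smap M (q+f) D m = \<zero>\<^bsub>comp M D\<^esub>"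
      using C.a_comm[OF c1 c2] by argo
    then have "smap M (q+g) D n = \<ominus>\<^bsub>comp M D\<^esub> smap M (q+f) D m"
      using C.minus_equality[OF _ c1 c2] by argo
    also have "\<dots> = smap M (q+f) D N" unfolding N_def using sm_neg[OF Dp(1) a(2)] by simp
    finally have eq: "smap M (q+g) D n = smap M (q+f) D N" .
    have Dt: "D - (q+g+f) \<in> \<tau>" using D(1) by (simp add: add_ac)
    have "((g,n),(f,N)) \<in> rel q" unfolding rel_iff
      using g(1,2) a(1) N eq Dt by - (intro conjI exI[of _ D], assumption+)
    then show ?thesis using g(3) frac_eq_iff[OF g(1,2) a(1) N] by simp
  qed
  have Nc: "frac \<tau> M q f N \<in> carrier (comp (loc \<tau> M) q)" by (rule loc_carrierI[OF a(1) N])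
  show ?thesis
    unfolding m_inv_def N_def[symmetric]
    apply (rule the_equality)
    using Nc s1 s2 apply simp
    using uniq by simp
qed


lemma Ple: "x \<in> P \<Longrightarrow> b - a = x \<Longrightarrow> pleq P a b" unfolding pleq_def by simp

lemma smapL_closed: assumes "pleq P a b" "Y \<in> carrier (comp (loc \<tau> M) a)"
  shows "smap (loc \<tau> M) a b Y \<in> carrier (comp (loc \<tau> M) b)"
proof -
  obtain f m where fm: "f \<in> \<tau>" "m \<in> Cr (a+f)" "Y = frac \<tau> M a f m" using assms(2) by (rule loc_carrierE)
  have p: "pleq P (a+f) (b+f)" using assms(1) pleq_mono by blast
  show ?thesis unfolding fm(3) loc_smap[OF fm(1,2) assms(1)] by (rule loc_carrierI[OF fm(1) sm_closed[OF p fm(2)]])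
qed

lemma smapL_comp: assumes "pleq P a b" "pleq P b c" "Y \<in> carrier (comp (loc \<tau> M) a)"
  shows "smap (loc \<tau> M) b c (smap (loc \<tau> M) a b Y) = smap (loc \<tau> M) a c Y"
proof -
  obtain f m where fm: "f \<in> \<tau>" "m \<in> Cr (a+f)" "Y = frac \<tau> M a f m" using assms(3) by (rule loc_carrierE)
  have p: "pleq P (a+f) (b+f)" "pleq P (b+f) (c+f)" using assms(1,2) pleq_mono by blast+
  have ac: "pleq P a c" using assms(1,2) pleq_trans by blast
  show ?thesis unfolding fm(3) loc_smap[OF fm(1,2) assms(1)] loc_smap[OF fm(1) sm_closed[OF p(1) fm(2)] assms(2)]
      loc_smap[OF fm(1,2) ac] sm_comp[OF p fm(2)] ..
qed

lemma smapL_zero: assumes "pleq P a b"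
  shows "smap (loc \<tau> M) a b \<zero>\<^bsub>comp (loc \<tau> M) a\<^esub> = \<zero>\<^bsub>comp (loc \<tau> M) b\<^esub>"
proof -
  have z: "\<zero>\<^bsub>comp M a\<^esub> \<in> Cr (a+0)" using zero_in by simp
  show ?thesis unfolding loc_zero using loc_smap[OF t0 z assms(1)] sm_zero[OF assms(1)] by simp
qed

lemma smapL_id: assumes "Y \<in> carrier (comp (loc \<tau> M) a)"
  shows "smap (loc \<tau> M) a a Y = Y"
proof -
  obtain f m where fm: "f \<in> \<tau>" "m \<in> Cr (a+f)" "Y = frac \<tau> M a f m" using assms by (rule loc_carrierE)
  show ?thesis unfolding fm(3) loc_smap[OF fm(1,2) pleq_refl] sm_id[OF fm(2)] ..
qed

lemma smapL_add: assumes ab: "pleq P a b" and Y: "Y \<in> carrier (comp (loc \<tau> M) a)" "Y' \<in> carrier (comp (loc \<tau> M) a)"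
  shows "smap (loc \<tau> M) a b (Y \<oplus>\<^bsub>comp (loc \<tau> M) a\<^esub> Y') =
     smap (loc \<tau> M) a b Y \<oplus>\<^bsub>comp (loc \<tau> M) b\<^esub> smap (loc \<tau> M) a b Y'"
proof -
  obtain f m where fm: "f \<in> \<tau>" "m \<in> Cr (a+f)" "Y = frac \<tau> M a f m" using Y(1) by (rule loc_carrierE)
  obtain g n where gn: "g \<in> \<tau>" "n \<in> Cr (a+g)" "Y' = frac \<tau> M a g n" using Y(2) by (rule loc_carrierE)
  have p1: "pleq P (a+f) (b+f)" "pleq P (a+g) (b+g)" "pleq P (a+(f+g)) (b+(f+g))" using ab pleq_mono by blast+
  have q1: "pleq P (a+f) (a+(f+g))" "pleq P (a+g) (a+(f+g))" "pleq P (b+f) (b+(f+g))" "pleq P (b+g) (b+(f+g))"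
    using pleq_addt[of g "a+f"] pleq_addt[of f "a+g"] pleq_addt[of g "b+f"] pleq_addt[of f "b+g"] fm gn
    by (simp_all add: add_ac)
  have r1: "pleq P (a+f) (b+(f+g))" "pleq P (a+g) (b+(f+g))" using p1 q1 pleq_trans by blast+
  have m1: "smap M (a+f) (a+(f+g)) m \<in> Cr (a+(f+g))" "smap M (a+g) (a+(f+g)) n \<in> Cr (a+(f+g))"
    using sm_closed q1 fm gn by blast+
  have "smap M (a+(f+g)) (b+(f+g)) (Sadd a f m g n) =
        smap M (a+f) (b+(f+g)) m \<oplus>\<^bsub>comp M (b+(f+g))\<^esub> smap M (a+g) (b+(f+g)) n"
    by (rule Sadd_at[OF fm(1) gn(1) fm(2) gn(2) p1(3)])
  also have "\<dots> = Sadd b f (smap M (a+f) (b+f) m) g (smap M (a+g) (b+g) n)"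
    using sm_comp[OF p1(1) q1(3) fm(2)] sm_comp[OF p1(2) q1(4) gn(2)] by simp
  finally have e: "smap M (a+(f+g)) (b+(f+g)) (Sadd a f m g n) = Sadd b f (smap M (a+f) (b+f) m) g (smap M (a+g) (b+g) n)" .
  show ?thesis
    unfolding fm(3) gn(3) loc_add[OF fm(1,2) gn(1,2)] loc_smap[OF fm(1,2) ab] loc_smap[OF gn(1,2) ab]
      loc_smap[OF tadd[OF fm(1) gn(1)] Sadd_closed[OF fm(1) gn(1) fm(2) gn(2)] ab]
      loc_add[OF fm(1) sm_closed[OF p1(1) fm(2)] gn(1) sm_closed[OF p1(2) gn(2)]] e ..
qed

lemma smapL_smult: assumes ab: "pleq P a b" and Y: "Y \<in> carrier (comp (loc \<tau> M) a)" and c: "c \<in> carrier K"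
  shows "smap (loc \<tau> M) a b (c \<odot>\<^bsub>comp (loc \<tau> M) a\<^esub> Y) = c \<odot>\<^bsub>comp (loc \<tau> M) b\<^esub> smap (loc \<tau> M) a b Y"
proof -
  obtain f m where fm: "f \<in> \<tau>" "m \<in> Cr (a+f)" "Y = frac \<tau> M a f m" using Y by (rule loc_carrierE)
  interpret A: module K "comp M (a+f)" by (rule mods)
  have p1: "pleq P (a+f) (b+f)" using ab pleq_mono by blast
  show ?thesis unfolding fm(3) loc_smult[OF fm(1,2) c] loc_smap[OF fm(1) A.smult_closed[OF c fm(2)] ab] loc_smap[OF fm(1,2) ab]
    loc_smult[OF fm(1) sm_closed[OF p1 fm(2)] c] sm_smult[OF p1 c fm(2)] ..
qed

lemma smult_L_closed: assumes Y: "Y \<in> carrier (comp (loc \<tau> M) a)" and c: "c \<in> carrier K"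
  shows "c \<odot>\<^bsub>comp (loc \<tau> M) a\<^esub> Y \<in> carrier (comp (loc \<tau> M) a)"
proof -
  obtain f m where fm: "f \<in> \<tau>" "m \<in> Cr (a+f)" "Y = frac \<tau> M a f m" using Y by (rule loc_carrierE)
  interpret A: module K "comp M (a+f)" by (rule mods)
  show ?thesis unfolding fm(3) loc_smult[OF fm(1,2) c] using fm c by (intro loc_carrierI) auto
qed

lemma add_L_closed: assumes Y: "Y \<in> carrier (comp (loc \<tau> M) a)" "Y' \<in> carrier (comp (loc \<tau> M) a)"
  shows "Y \<oplus>\<^bsub>comp (loc \<tau> M) a\<^esub> Y' \<in> carrier (comp (loc \<tau> M) a)"
proof -
  obtain f m where fm: "f \<in> \<tau>" "m \<in> Cr (a+f)" "Y = frac \<tau> M a f m" using Y(1) by (rule loc_carrierE)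
  obtain g n where gn: "g \<in> \<tau>" "n \<in> Cr (a+g)" "Y' = frac \<tau> M a g n" using Y(2) by (rule loc_carrierE)
  show ?thesis unfolding fm(3) gn(3) loc_add[OF fm(1,2) gn(1,2)]
    by (rule loc_carrierI[OF tadd[OF fm(1) gn(1)] Sadd_closed[OF fm(1) gn(1) fm(2) gn(2)]])
qed

lemma zero_L_carrier: "\<zero>\<^bsub>comp (loc \<tau> M) a\<^esub> \<in> carrier (comp (loc \<tau> M) a)"
  unfolding loc_zero using loc_carrierI[OF t0, of "\<zero>\<^bsub>comp M a\<^esub>" a] zero_in by simp

lemma inv_L_closed: assumes Y: "Y \<in> carrier (comp (loc \<tau> M) a)"
  shows "m_inv (add_monoid (comp (loc \<tau> M) a)) Y \<in> carrier (comp (loc \<tau> M) a)"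
proof -
  obtain f m where fm: "f \<in> \<tau>" "m \<in> Cr (a+f)" "Y = frac \<tau> M a f m" using Y by (rule loc_carrierE)
  interpret A: module K "comp M (a+f)" by (rule mods)
  show ?thesis unfolding fm(3) loc_inv[OF fm(1,2)] using fm by (intro loc_carrierI) auto
qed

lemma zero_zero_L: "\<zero>\<^bsub>comp (loc \<tau> M) a\<^esub> \<oplus>\<^bsub>comp (loc \<tau> M) a\<^esub> \<zero>\<^bsub>comp (loc \<tau> M) a\<^esub> = \<zero>\<^bsub>comp (loc \<tau> M) a\<^esub>"
proof -
  interpret A: module K "comp M a" by (rule mods)
  have z: "\<zero>\<^bsub>comp M a\<^esub> \<in> Cr (a+0)" using zero_in by simp
  show ?thesis unfolding loc_zero using loc_add[OF t0 z t0 z] sm_id by simp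
qed

lemma smult_zero_L: assumes "c \<in> carrier K" shows "c \<odot>\<^bsub>comp (loc \<tau> M) a\<^esub> \<zero>\<^bsub>comp (loc \<tau> M) a\<^esub> = \<zero>\<^bsub>comp (loc \<tau> M) a\<^esub>"
proof -
  interpret A: module K "comp M a" by (rule mods)
  have z: "\<zero>\<^bsub>comp M a\<^esub> \<in> Cr (a+0)" using zero_in by simp
  show ?thesis unfolding loc_zero using loc_smult[OF t0 z assms] assms by simp
qed

lemma inv_zero_L: "m_inv (add_monoid (comp (loc \<tau> M) a)) \<zero>\<^bsub>comp (loc \<tau> M) a\<^esub> = \<zero>\<^bsub>comp (loc \<tau> M) a\<^esub>"
proof -
  interpret A: module K "comp M a" by (rule mods)
  have z: "\<zero>\<^bsub>comp M a\<^esub> \<in> Cr (a+0)" using zero_in by simp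
  have "m_inv (add_monoid (comp (loc \<tau> M) a)) (frac \<tau> M a 0 \<zero>\<^bsub>comp M a\<^esub>) = frac \<tau> M a 0 \<zero>\<^bsub>comp M a\<^esub>"
    using loc_inv[OF t0 z] A.minus_equality[OF A.l_zero[OF A.zero_closed] A.zero_closed A.zero_closed] by simp
  then show ?thesis unfolding loc_zero[symmetric] .
qed

lemma smapL_inv: assumes ab: "pleq P a b" and Y: "Y \<in> carrier (comp (loc \<tau> M) a)"
  shows "smap (loc \<tau> M) a b (m_inv (add_monoid (comp (loc \<tau> M) a)) Y) = m_inv (add_monoid (comp (loc \<tau> M) b)) (smap (loc \<tau> M) a b Y)"
proof -
  obtain f m where fm: "f \<in> \<tau>" "m \<in> Cr (a+f)" "Y = frac \<tau> M a f m" using Y by (rule loc_carrierE)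
  interpret A: module K "comp M (a+f)" by (rule mods)
  have p1: "pleq P (a+f) (b+f)" using ab pleq_mono by blast
  show ?thesis unfolding fm(3) loc_inv[OF fm(1,2)] loc_smap[OF fm(1) A.a_inv_closed[OF fm(2)] ab] loc_smap[OF fm(1,2) ab]
    loc_inv[OF fm(1) sm_closed[OF p1 fm(2)]] sm_neg[OF p1 fm(2)] ..
qed


lemma memL: assumes "0 \<in> \<sigma>"
  shows "(k,C) \<in> frac \<sigma> (loc \<tau> M) q 0 W \<longleftrightarrow> k \<in> \<sigma> \<and> W \<in> carrier (comp (loc \<tau> M) q) \<and> C \<in> carrier (comp (loc \<tau> M) (q+k))
    \<and> (\<exists>h\<in>\<sigma>. smap (loc \<tau> M) q (q+k+h) W = smap (loc \<tau> M) (q+k) (q+k+h) C)"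
  unfolding frac_def frac_rel_def using assms by simp

lemma locL_zero_iff: assumes sP: "\<sigma> \<subseteq> P" and s0: "0 \<in> \<sigma>" and sa: "\<And>a b. a \<in> \<sigma> \<Longrightarrow> b \<in> \<sigma> \<Longrightarrow> a + b \<in> \<sigma>"
  and Y: "Y \<in> carrier (comp (loc \<tau> M) q)"
  shows "locmap \<sigma> (loc \<tau> M) q Y = \<zero>\<^bsub>comp (loc \<sigma> (loc \<tau> M)) q\<^esub> \<longleftrightarrow>
     (\<exists>g\<in>\<sigma>. smap (loc \<tau> M) q (q+g) Y = \<zero>\<^bsub>comp (loc \<tau> M) (q+g)\<^esub>)"
proof -
  define Z where "Z = \<zero>\<^bsub>comp (loc \<tau> M) q\<^esub>"
  have Zc: "Z \<in> carrier (comp (loc \<tau> M) q)" unfolding Z_def by (rule zero_L_carrier)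
  have lhs: "locmap \<sigma> (loc \<tau> M) q Y = frac \<sigma> (loc \<tau> M) q 0 Y"
    unfolding locmap_def using smapL_id[OF Y] by simp
  have rhs: "\<zero>\<^bsub>comp (loc \<sigma> (loc \<tau> M)) q\<^esub> = frac \<sigma> (loc \<tau> M) q 0 Z"
    unfolding Z_def by (simp add: loc_def loc_comp_def)
  have Zs: "smap (loc \<tau> M) a b \<zero>\<^bsub>comp (loc \<tau> M) a\<^esub> = \<zero>\<^bsub>comp (loc \<tau> M) b\<^esub>" if "pleq P a b" for a b
    using smapL_zero[OF that] .
  have inP: "x \<in> P" if "x \<in> \<sigma>" for x using sP that by blast
  show ?thesis unfolding lhs rhs
  proof
    assume e: "frac \<sigma> (loc \<tau> M) q 0 Y = frac \<sigma> (loc \<tau> M) q 0 Z"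
    have "(0,Y) \<in> frac \<sigma> (loc \<tau> M) q 0 Y" unfolding memL[OF s0] using s0 Y
      by (intro conjI bexI[of _ 0]) simp_all
    then have "(0,Y) \<in> frac \<sigma> (loc \<tau> M) q 0 Z" using e by simp
    then obtain h where h: "h \<in> \<sigma>" "smap (loc \<tau> M) q (q+h) Z = smap (loc \<tau> M) q (q+h) Y"
      unfolding memL[OF s0] by auto
    have "pleq P q (q+h)" by (rule Ple[OF inP[OF h(1)]]) simp
    then show "\<exists>g\<in>\<sigma>. smap (loc \<tau> M) q (q+g) Y = \<zero>\<^bsub>comp (loc \<tau> M) (q+g)\<^esub>"
      using h Zs unfolding Z_def by metis
  next
    assume "\<exists>g\<in>\<sigma>. smap (loc \<tau> M) q (q+g) Y = \<zero>\<^bsub>comp (loc \<tau> M) (q+g)\<^esub>"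
    then obtain g where g: "g \<in> \<sigma>" "smap (loc \<tau> M) q (q+g) Y = \<zero>\<^bsub>comp (loc \<tau> M) (q+g)\<^esub>" by blast
    have main: "(\<exists>h\<in>\<sigma>. smap (loc \<tau> M) q (q+k+h) Y = smap (loc \<tau> M) (q+k) (q+k+h) C) \<longleftrightarrow>
                (\<exists>h\<in>\<sigma>. smap (loc \<tau> M) q (q+k+h) Z = smap (loc \<tau> M) (q+k) (q+k+h) C)"
      if k: "k \<in> \<sigma>" and C: "C \<in> carrier (comp (loc \<tau> M) (q+k))" for k C
    proof -
      have kill: "smap (loc \<tau> M) q (q+k+(h+g)) Y = \<zero>\<^bsub>comp (loc \<tau> M) (q+k+(h+g))\<^esub>" if h: "h \<in> \<sigma>" for h
      proof -
        have p1: "pleq P q (q+g)" by (rule Ple[OF inP[OF g(1)]]) simp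
        have p2: "pleq P (q+g) (q+k+(h+g))" by (rule Ple[OF inP[OF sa[OF k h]]]) (simp add: algebra_simps)
        have "smap (loc \<tau> M) q (q+k+(h+g)) Y = smap (loc \<tau> M) (q+g) (q+k+(h+g)) (smap (loc \<tau> M) q (q+g) Y)"
          using smapL_comp[OF p1 p2 Y] by simp
        also have "\<dots> = \<zero>\<^bsub>comp (loc \<tau> M) (q+k+(h+g))\<^esub>" unfolding g(2) by (rule Zs[OF p2])
        finally show ?thesis .
      qed
      have Zk: "smap (loc \<tau> M) q (q+k+h) Z = \<zero>\<^bsub>comp (loc \<tau> M) (q+k+h)\<^esub>" if h: "h \<in> \<sigma>" for h
        unfolding Z_def by (rule Zs, rule Ple[OF inP[OF sa[OF k h]]]) (simp add: algebra_simps)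
      have Cup: "smap (loc \<tau> M) (q+k) (q+k+(h+g)) C = smap (loc \<tau> M) (q+k+h) (q+k+(h+g)) (smap (loc \<tau> M) (q+k) (q+k+h) C)"
        if h: "h \<in> \<sigma>" for h
      proof -
        have p1: "pleq P (q+k) (q+k+h)" by (rule Ple[OF inP[OF h]]) simp
        have p2: "pleq P (q+k+h) (q+k+(h+g))" by (rule Ple[OF inP[OF g(1)]]) (simp add: algebra_simps)
        show ?thesis using smapL_comp[OF p1 p2 C] by simp
      qed
      have p3: "pleq P (q+k+h) (q+k+(h+g))" if h: "h \<in> \<sigma>" for h by (rule Ple[OF inP[OF g(1)]]) (simp add: algebra_simps)
      show ?thesis
      proof
        assume "\<exists>h\<in>\<sigma>. smap (loc \<tau> M) q (q+k+h) Y = smap (loc \<tau> M) (q+k) (q+k+h) C"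
        then obtain h where h: "h \<in> \<sigma>" "smap (loc \<tau> M) q (q+k+h) Y = smap (loc \<tau> M) (q+k) (q+k+h) C" by blast
        have "smap (loc \<tau> M) (q+k) (q+k+(h+g)) C = smap (loc \<tau> M) (q+k+h) (q+k+(h+g)) (smap (loc \<tau> M) q (q+k+h) Y)"
          using Cup[OF h(1)] h(2) by simp
        also have "\<dots> = smap (loc \<tau> M) q (q+k+(h+g)) Y"
          by (rule smapL_comp[OF _ p3[OF h(1)] Y], rule Ple[OF inP[OF sa[OF k h(1)]]]) (simp add: algebra_simps)
        also have "\<dots> = \<zero>\<^bsub>comp (loc \<tau> M) (q+k+(h+g))\<^esub>" by (rule kill[OF h(1)])
        finally have "smap (loc \<tau> M) q (q+k+(h+g)) Z = smap (loc \<tau> M) (q+k) (q+k+(h+g)) C"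
          using Zk[OF sa[OF h(1) g(1)]] by (simp add: add.assoc)
        then show "\<exists>h\<in>\<sigma>. smap (loc \<tau> M) q (q+k+h) Z = smap (loc \<tau> M) (q+k) (q+k+h) C"
          using sa[OF h(1) g(1)] by blast
      next
        assume "\<exists>h\<in>\<sigma>. smap (loc \<tau> M) q (q+k+h) Z = smap (loc \<tau> M) (q+k) (q+k+h) C"
        then obtain h where h: "h \<in> \<sigma>" "smap (loc \<tau> M) q (q+k+h) Z = smap (loc \<tau> M) (q+k) (q+k+h) C" by blast
        have "smap (loc \<tau> M) (q+k) (q+k+(h+g)) C = smap (loc \<tau> M) (q+k+h) (q+k+(h+g)) \<zero>\<^bsub>comp (loc \<tau> M) (q+k+h)\<^esub>"
          using Cup[OF h(1)] h(2) Zk[OF h(1)] by simp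
        also have "\<dots> = \<zero>\<^bsub>comp (loc \<tau> M) (q+k+(h+g))\<^esub>" by (rule Zs[OF p3[OF h(1)]])
        finally have "smap (loc \<tau> M) q (q+k+(h+g)) Y = smap (loc \<tau> M) (q+k) (q+k+(h+g)) C"
          using kill[OF h(1)] by simp
        then show "\<exists>h\<in>\<sigma>. smap (loc \<tau> M) q (q+k+h) Y = smap (loc \<tau> M) (q+k) (q+k+h) C"
          using sa[OF h(1) g(1)] by (metis add.assoc)
      qed
    qed
    show "frac \<sigma> (loc \<tau> M) q 0 Y = frac \<sigma> (loc \<tau> M) q 0 Z"
    proof (rule Set.set_eqI)
      fix X show "X \<in> frac \<sigma> (loc \<tau> M) q 0 Y \<longleftrightarrow> X \<in> frac \<sigma> (loc \<tau> M) q 0 Z"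
      proof (cases X)
        case (Pair k C)
        show ?thesis unfolding Pair memL[OF s0] using main[of k C] Y Zc by blast
      qed
    qed
  qed
qed


lemma face_props: "face P \<sigma> \<Longrightarrow> \<sigma> \<subseteq> P \<and> 0 \<in> \<sigma> \<and> (\<forall>a\<in>\<sigma>. \<forall>b\<in>\<sigma>. a + b \<in> \<sigma>)"
  unfolding face_def submonoid_def by blast

lemma Gamma_iff: "Y \<in> Gamma P \<tau> (loc \<tau> M) q \<longleftrightarrow> Y \<in> carrier (comp (loc \<tau> M) q) \<and>
   (\<forall>\<sigma>. face P \<sigma> \<and> \<not> \<sigma> \<subseteq> \<tau> \<longrightarrow> (\<exists>g\<in>\<sigma>. smap (loc \<tau> M) q (q+g) Y = \<zero>\<^bsub>comp (loc \<tau> M) (q+g)\<^esub>))"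
proof -
  have "locmap \<sigma> (loc \<tau> M) q Y = \<zero>\<^bsub>comp (loc \<sigma> (loc \<tau> M)) q\<^esub> \<longleftrightarrow>
     (\<exists>g\<in>\<sigma>. smap (loc \<tau> M) q (q+g) Y = \<zero>\<^bsub>comp (loc \<tau> M) (q+g)\<^esub>)"
    if "face P \<sigma>" "Y \<in> carrier (comp (loc \<tau> M) q)" for \<sigma>
    using face_props[OF that(1)] locL_zero_iff[OF _ _ _ that(2), of \<sigma>] by blast
  then show ?thesis unfolding Gamma_def by blast
qed

lemma kill_mono: assumes Y: "Y \<in> carrier (comp (loc \<tau> M) q)" and g: "g \<in> P"
  and z: "smap (loc \<tau> M) q (q+g) Y = \<zero>\<^bsub>comp (loc \<tau> M) (q+g)\<^esub>" and D: "pleq P (q+g) D"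
  shows "smap (loc \<tau> M) q D Y = \<zero>\<^bsub>comp (loc \<tau> M) D\<^esub>"
proof -
  have p: "pleq P q (q+g)" by (rule Ple[OF g]) simp
  show ?thesis using smapL_comp[OF p D Y] z smapL_zero[OF D] by simp
qed

lemma Gamma_sub: "graded_submodule P K (loc \<tau> M) (Gamma P \<tau> (loc \<tau> M))"
proof -
  let ?L = "loc \<tau> M"
  let ?G = "Gamma P \<tau> (loc \<tau> M)"
  have sub: "submodule (?G q) K (comp ?L q)" for q
  proof (intro submodule.intro subgroup.intro submodule_axioms.intro)
    show "?G q \<subseteq> carrier (add_monoid (comp ?L q))" by (intro subsetI) (simp add: Gamma_iff)
  next
    fix x y assume x: "x \<in> ?G q" and y: "y \<in> ?G q"
    have xc: "x \<in> carrier (comp ?L q)" and yc: "y \<in> carrier (comp ?L q)" using x y unfolding Gamma_iff by auto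
    have "\<exists>g\<in>\<sigma>. smap ?L q (q+g) (x \<oplus>\<^bsub>comp ?L q\<^esub> y) = \<zero>\<^bsub>comp ?L (q+g)\<^esub>" if s: "face P \<sigma>" "\<not> \<sigma> \<subseteq> \<tau>" for \<sigma>
    proof -
      obtain g1 where g1: "g1 \<in> \<sigma>" "smap ?L q (q+g1) x = \<zero>\<^bsub>comp ?L (q+g1)\<^esub>" using x s unfolding Gamma_iff by blast
      obtain g2 where g2: "g2 \<in> \<sigma>" "smap ?L q (q+g2) y = \<zero>\<^bsub>comp ?L (q+g2)\<^esub>" using y s unfolding Gamma_iff by blast
      have fp: "\<sigma> \<subseteq> P" "\<forall>a\<in>\<sigma>. \<forall>b\<in>\<sigma>. a + b \<in> \<sigma>" using face_props[OF s(1)] by auto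
      have g12: "g1 + g2 \<in> \<sigma>" using fp g1 g2 by blast
      have P12: "g1 \<in> P" "g2 \<in> P" "g1 + g2 \<in> P" using fp g1 g2 g12 by auto
      have a: "pleq P q (q+(g1+g2))" by (rule Ple[OF P12(3)]) simp
      have b1: "pleq P (q+g1) (q+(g1+g2))" by (rule Ple[OF P12(2)]) (simp add: algebra_simps)
      have b2: "pleq P (q+g2) (q+(g1+g2))" by (rule Ple[OF P12(1)]) (simp add: algebra_simps)
      have "smap ?L q (q+(g1+g2)) (x \<oplus>\<^bsub>comp ?L q\<^esub> y) = smap ?L q (q+(g1+g2)) x \<oplus>\<^bsub>comp ?L (q+(g1+g2))\<^esub> smap ?L q (q+(g1+g2)) y"
        by (rule smapL_add[OF a xc yc])
      also have "\<dots> = \<zero>\<^bsub>comp ?L (q+(g1+g2))\<^esub>"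
        using kill_mono[OF xc P12(1) g1(2) b1] kill_mono[OF yc P12(2) g2(2) b2] zero_zero_L by simp
      finally show ?thesis using g12 by blast
    qed
    then show "x \<otimes>\<^bsub>add_monoid (comp ?L q)\<^esub> y \<in> ?G q" unfolding Gamma_iff using add_L_closed[OF xc yc] by simp
  next
    have "\<exists>g\<in>\<sigma>. smap ?L q (q+g) \<zero>\<^bsub>comp ?L q\<^esub> = \<zero>\<^bsub>comp ?L (q+g)\<^esub>" if s: "face P \<sigma>" for \<sigma>
      using face_props[OF s] smapL_zero[OF pleq_refl, of q] by (intro bexI[of _ 0]) auto
    then show "\<one>\<^bsub>add_monoid (comp ?L q)\<^esub> \<in> ?G q" unfolding Gamma_iff using zero_L_carrier by simp
  next
    fix x assume x: "x \<in> ?G q"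
    have xc: "x \<in> carrier (comp ?L q)" using x unfolding Gamma_iff by auto
    have "\<exists>g\<in>\<sigma>. smap ?L q (q+g) (m_inv (add_monoid (comp ?L q)) x) = \<zero>\<^bsub>comp ?L (q+g)\<^esub>" if s: "face P \<sigma>" "\<not> \<sigma> \<subseteq> \<tau>" for \<sigma>
    proof -
      obtain g where g: "g \<in> \<sigma>" "smap ?L q (q+g) x = \<zero>\<^bsub>comp ?L (q+g)\<^esub>" using x s unfolding Gamma_iff by blast
      have "g \<in> P" using face_props[OF s(1)] g by auto
      then have a: "pleq P q (q+g)" by (rule Ple) simp
      show ?thesis using smapL_inv[OF a xc] g inv_zero_L by auto
    qed
    then show "inv\<^bsub>add_monoid (comp ?L q)\<^esub> x \<in> ?G q" unfolding Gamma_iff using inv_L_closed[OF xc] by simp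
  next
    fix c x assume c: "c \<in> carrier K" and x: "x \<in> ?G q"
    have xc: "x \<in> carrier (comp ?L q)" using x unfolding Gamma_iff by auto
    have "\<exists>g\<in>\<sigma>. smap ?L q (q+g) (c \<odot>\<^bsub>comp ?L q\<^esub> x) = \<zero>\<^bsub>comp ?L (q+g)\<^esub>" if s: "face P \<sigma>" "\<not> \<sigma> \<subseteq> \<tau>" for \<sigma>
    proof -
      obtain g where g: "g \<in> \<sigma>" "smap ?L q (q+g) x = \<zero>\<^bsub>comp ?L (q+g)\<^esub>" using x s unfolding Gamma_iff by blast
      have "g \<in> P" using face_props[OF s(1)] g by auto
      then have a: "pleq P q (q+g)" by (rule Ple) simp
      show ?thesis using smapL_smult[OF a xc c] g smult_zero_L[OF c] by auto
    qed
    then show "c \<odot>\<^bsub>comp ?L q\<^esub> x \<in> ?G q" unfolding Gamma_iff using smult_L_closed[OF xc c] by simp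
  qed
  have sm: "smap ?L q q' y \<in> ?G q'" if qq: "pleq P q q'" and y: "y \<in> ?G q" for q q' y
  proof -
    have yc: "y \<in> carrier (comp ?L q)" using y unfolding Gamma_iff by auto
    have "\<exists>g\<in>\<sigma>. smap ?L q' (q'+g) (smap ?L q q' y) = \<zero>\<^bsub>comp ?L (q'+g)\<^esub>" if s: "face P \<sigma>" "\<not> \<sigma> \<subseteq> \<tau>" for \<sigma>
    proof -
      obtain g where g: "g \<in> \<sigma>" "smap ?L q (q+g) y = \<zero>\<^bsub>comp ?L (q+g)\<^esub>" using y s unfolding Gamma_iff by blast
      have gP: "g \<in> P" using face_props[OF s(1)] g by auto
      have a: "pleq P q' (q'+g)" using gP by (rule Ple) simp
      have b: "pleq P (q+g) (q'+g)" using qq pleq_mono by blast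
      have "smap ?L q' (q'+g) (smap ?L q q' y) = smap ?L q (q'+g) y" by (rule smapL_comp[OF qq a yc])
      also have "\<dots> = \<zero>\<^bsub>comp ?L (q'+g)\<^esub>" by (rule kill_mono[OF yc gP g(2) b])
      finally show ?thesis using g(1) by blast
    qed
    then show ?thesis unfolding Gamma_iff using smapL_closed[OF qq yc] by simp
  qed
  show ?thesis unfolding graded_submodule_def using sub sm by blast
qed


lemma ntimes_add: "ntimes (a + b) f = ntimes a f + ntimes b f"
  by (induction a) (simp_all add: add.assoc)

lemma ntimes_P: "f \<in> P \<Longrightarrow> ntimes n f \<in> P"
  by (induction n) (simp_all add: P0 Padd)

lemma ntimes_face: "face P \<sigma> \<Longrightarrow> f \<in> \<sigma> \<Longrightarrow> ntimes n f \<in> \<sigma>"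
  by (induction n) (use face_props in auto)

lemma locmap_eq: "y \<in> Cr q \<Longrightarrow> locmap \<tau> M q y = frac \<tau> M q 0 y"
  unfolding locmap_def using sm_id by simp

lemma dir_back:
  assumes H: "\<forall>q y. y \<in> Cr q \<and> y \<noteq> \<zero>\<^bsub>comp M q\<^esub> \<longrightarrow>
       (\<exists>q' y'. divides P M q y q' y' \<and> coprimary_elem P \<tau> M q' y')"
  shows "coprimary_module P K \<tau> M"
proof -
  have inj: "inj_on (locmap \<tau> M q) (Cr q)" for q
  proof (rule inj_onI)
    fix y1 y2 assume y1: "y1 \<in> Cr q" and y2: "y2 \<in> Cr q" and e: "locmap \<tau> M q y1 = locmap \<tau> M q y2"
    interpret A: module K "comp M q" by (rule mods)
    have y1': "y1 \<in> Cr (q+0)" and y2': "y2 \<in> Cr (q+0)" using y1 y2 by simp_all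
    have "((0,y1),(0,y2)) \<in> rel q" using e unfolding locmap_eq[OF y1] locmap_eq[OF y2]
      using frac_eq_iff[OF t0 y1' t0 y2'] by simp
    then obtain D where D: "D - q \<in> \<tau>" "smap M q D y1 = smap M q D y2" unfolding rel_iff by auto
    have pD: "pleq P q D" by (rule tPle[OF D(1)]) simp
    define d where "d = y1 \<oplus>\<^bsub>comp M q\<^esub> \<ominus>\<^bsub>comp M q\<^esub> y2"
    have dc: "d \<in> Cr q" unfolding d_def using y1 y2 by simp
    interpret B: module K "comp M D" by (rule mods)
    have c2: "smap M q D y2 \<in> Cr D" by (rule sm_closed[OF pD y2])
    have dD: "smap M q D d = \<zero>\<^bsub>comp M D\<^esub>" unfolding d_def
      using sm_add[OF pD y1 A.a_inv_closed[OF y2]] sm_neg[OF pD y2] D(2) B.r_neg[OF c2] by simp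
    show "y1 = y2"
    proof (rule ccontr)
      assume ne: "y1 \<noteq> y2"
      have "d \<noteq> \<zero>\<^bsub>comp M q\<^esub>"
      proof
        assume "d = \<zero>\<^bsub>comp M q\<^esub>"
        then have "\<ominus>\<^bsub>comp M q\<^esub> (\<ominus>\<^bsub>comp M q\<^esub> y2) = y1"
          using A.minus_equality[of y1 "\<ominus>\<^bsub>comp M q\<^esub> y2"] y1 y2 unfolding d_def by simp
        then show False using ne A.minus_minus[OF y2] by simp
      qed
      then obtain q' y' where dv: "divides P M q d q' y'" and cp: "coprimary_elem P \<tau> M q' y'"
        using H dc by blast
      have qq: "pleq P q q'" and y'e: "y' = smap M q q' d" using dv unfolding divides_def by auto
      have per: "smap M q' (q' + (D - q)) y' \<noteq> \<zero>\<^bsub>comp M (q' + (D - q))\<^esub>"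
        using cp D(1) unfolding coprimary_elem_def persistent_def by blast
      have p1: "pleq P q' (q' + (D - q))" by (rule tPle[OF D(1)]) simp
      have p2: "pleq P D (q' + (D - q))" using qq unfolding pleq_def by (simp add: algebra_simps)
      have "smap M q' (q' + (D - q)) y' = smap M q (q' + (D - q)) d" unfolding y'e by (rule sm_comp[OF qq p1 dc])
      also have "\<dots> = smap M D (q' + (D - q)) (smap M q D d)" using sm_comp[OF pD p2 dc] by simp
      also have "\<dots> = \<zero>\<^bsub>comp M (q' + (D - q))\<^esub>" unfolding dD by (rule sm_zero[OF p2])
      finally show False using per by simp
    qed
  qed
  have ess: "essential P K (loc \<tau> M) (Gamma P \<tau> (loc \<tau> M))"
    unfolding essential_def
  proof (intro conjI Gamma_sub allI impI)
    fix T assume "graded_submodule P K (loc \<tau> M) T \<and> (\<exists>q. \<exists>y\<in>T q. y \<noteq> \<zero>\<^bsub>comp (loc \<tau> M) q\<^esub>)"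
    then obtain q0 A where gT: "graded_submodule P K (loc \<tau> M) T" and A: "A \<in> T q0" "A \<noteq> \<zero>\<^bsub>comp (loc \<tau> M) q0\<^esub>"
      by blast
    have "subgroup (T q0) (add_monoid (comp (loc \<tau> M) q0))"
      using gT unfolding graded_submodule_def submodule_def by blast
    then have Ac: "A \<in> carrier (comp (loc \<tau> M) q0)" using A(1) subgroup.subset by force
    obtain f m where fm: "f \<in> \<tau>" "m \<in> Cr (q0+f)" "A = frac \<tau> M q0 f m" using Ac by (rule loc_carrierE)
    have mne: "m \<noteq> \<zero>\<^bsub>comp M (q0+f)\<^esub>"
    proof
      assume "m = \<zero>\<^bsub>comp M (q0+f)\<^esub>"
      then have "A = \<zero>\<^bsub>comp (loc \<tau> M) q0\<^esub>" unfolding fm(3) frac_zero_iff[OF fm(1,2)]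
        using sm_id[OF zero_in] t0 by (intro exI[of _ "q0+f"]) simp
      then show False using A(2) by simp
    qed
    then obtain q' y' where dv: "divides P M (q0+f) m q' y'" and cp: "coprimary_elem P \<tau> M q' y'"
      using H fm(2) by blast
    have qq: "pleq P (q0+f) q'" and y'e: "y' = smap M (q0+f) q' m" and y'c: "y' \<in> Cr q'"
      using dv unfolding divides_def by auto
    define q1 where "q1 = q' - f"
    have q1f: "q1 + f = q'" unfolding q1_def by simp
    have p01: "pleq P q0 q1" using qq unfolding q1_def pleq_def by (simp add: algebra_simps)
    have y'c1: "y' \<in> Cr (q1+f)" using y'c q1f by simp
    define B where "B = frac \<tau> M q1 f y'"
    have BT: "B \<in> T q1"
    proof -
      have "smap (loc \<tau> M) q0 q1 A \<in> T q1" using gT A(1) p01 unfolding graded_submodule_def by blast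
      moreover have "smap (loc \<tau> M) q0 q1 A = B" unfolding fm(3) loc_smap[OF fm(1,2) p01] B_def q1f y'e ..
      ultimately show ?thesis by simp
    qed
    have Bne: "B \<noteq> \<zero>\<^bsub>comp (loc \<tau> M) q1\<^esub>"
    proof
      assume "B = \<zero>\<^bsub>comp (loc \<tau> M) q1\<^esub>"
      then obtain D where D: "D - q' \<in> \<tau>" "smap M q' D y' = \<zero>\<^bsub>comp M D\<^esub>"
        unfolding B_def frac_zero_iff[OF fm(1) y'c1] q1f by blast
      have "smap M q' (q' + (D - q')) y' \<noteq> \<zero>\<^bsub>comp M (q' + (D - q'))\<^esub>"
        using cp D(1) unfolding coprimary_elem_def persistent_def by blast
      then show False using D(2) by simp
    qed
    have BG: "B \<in> Gamma P \<tau> (loc \<tau> M) q1"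
      unfolding Gamma_iff
    proof (intro conjI allI impI)
      show "B \<in> carrier (comp (loc \<tau> M) q1)" unfolding B_def by (rule loc_carrierI[OF fm(1) y'c1])
    next
      fix \<sigma> assume s: "face P \<sigma> \<and> \<not> \<sigma> \<subseteq> \<tau>"
      then obtain f' where f': "f' \<in> \<sigma>" "f' \<notin> \<tau>" by blast
      have f'P: "f' \<in> P" using face_props s f' by blast
      obtain N where N: "\<forall>n\<ge>N. smap M q' (q' + ntimes n f') y' = \<zero>\<^bsub>comp M (q' + ntimes n f')\<^esub>"
        using cp f' f'P unfolding coprimary_elem_def transient_def by blast
      define g where "g = ntimes N f'"
      have gs: "g \<in> \<sigma>" unfolding g_def using ntimes_face s f' by blast
      have gP: "g \<in> P" unfolding g_def using ntimes_P[OF f'P] .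
      have pg: "pleq P q1 (q1+g)" by (rule Ple[OF gP]) simp
      have e1: "q1 + g + f = q' + g" unfolding q1_def by (simp add: algebra_simps)
      have pg2: "pleq P q' (q'+g)" by (rule Ple[OF gP]) simp
      have yg: "smap M q' (q'+g) y' = \<zero>\<^bsub>comp M (q'+g)\<^esub>" using N unfolding g_def by blast
      have "smap (loc \<tau> M) q1 (q1+g) B = frac \<tau> M (q1+g) f (smap M q' (q'+g) y')"
        unfolding B_def loc_smap[OF fm(1) y'c1 pg] q1f e1 ..
      also have "\<dots> = frac \<tau> M (q1+g) f \<zero>\<^bsub>comp M (q1+g+f)\<^esub>" unfolding yg e1 ..
      also have "\<dots> = \<zero>\<^bsub>comp (loc \<tau> M) (q1+g)\<^esub>"
        unfolding frac_zero_iff[OF fm(1) zero_in] using sm_id[OF zero_in] t0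
        by (intro exI[of _ "q1+g+f"]) simp
      finally show "\<exists>g\<in>\<sigma>. smap (loc \<tau> M) q1 (q1+g) B = \<zero>\<^bsub>comp (loc \<tau> M) (q1+g)\<^esub>" using gs by blast
    qed
    show "\<exists>q. \<exists>y\<in>T q \<inter> Gamma P \<tau> (loc \<tau> M) q. y \<noteq> \<zero>\<^bsub>comp (loc \<tau> M) q\<^esub>"
      using BT BG Bne by blast
  qed
  show ?thesis unfolding coprimary_module_def using inj ess by blast
qed


lemma iota_c: "u \<in> Cr q \<Longrightarrow> u \<in> Cr (q+0)" by simp

lemma iota_carrier: "u \<in> Cr q \<Longrightarrow> frac \<tau> M q 0 u \<in> carrier (comp (loc \<tau> M) q)"
  using loc_carrierI[OF t0 iota_c] by simp

lemma iota_add: assumes u: "u \<in> Cr q" and v: "v \<in> Cr q"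
  shows "frac \<tau> M q 0 u \<oplus>\<^bsub>comp (loc \<tau> M) q\<^esub> frac \<tau> M q 0 v = frac \<tau> M q 0 (u \<oplus>\<^bsub>comp M q\<^esub> v)"
  using loc_add[OF t0 iota_c[OF u] t0 iota_c[OF v]] sm_id[OF u] sm_id[OF v] by simp

lemma iota_smult: assumes u: "u \<in> Cr q" and c: "c \<in> carrier K"
  shows "c \<odot>\<^bsub>comp (loc \<tau> M) q\<^esub> frac \<tau> M q 0 u = frac \<tau> M q 0 (c \<odot>\<^bsub>comp M q\<^esub> u)"
  using loc_smult[OF t0 iota_c[OF u] c] by simp

lemma iota_smap: assumes u: "u \<in> Cr q" and qq: "pleq P q q'"
  shows "smap (loc \<tau> M) q q' (frac \<tau> M q 0 u) = frac \<tau> M q' 0 (smap M q q' u)"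
  using loc_smap[OF t0 iota_c[OF u] qq] by simp

lemma iota_inv: assumes u: "u \<in> Cr q"
  shows "m_inv (add_monoid (comp (loc \<tau> M) q)) (frac \<tau> M q 0 u) = frac \<tau> M q 0 (\<ominus>\<^bsub>comp M q\<^esub> u)"
  using loc_inv[OF t0 iota_c[OF u]] by simp

lemma iota_zero_iff: assumes u: "u \<in> Cr q"
  shows "frac \<tau> M q 0 u = \<zero>\<^bsub>comp (loc \<tau> M) q\<^esub> \<longleftrightarrow> (\<exists>D. D - q \<in> \<tau> \<and> smap M q D u = \<zero>\<^bsub>comp M D\<^esub>)"
  using frac_zero_iff[OF t0 iota_c[OF u]] by simp

lemma span_sub: assumes y: "y \<in> Cr q"
  defines "T \<equiv> (\<lambda>q2. if pleq P q q2 then {frac \<tau> M q2 0 (c \<odot>\<^bsub>comp M q2\<^esub> smap M q q2 y) |c. c \<in> carrier K}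
                 else {\<zero>\<^bsub>comp (loc \<tau> M) q2\<^esub>})"
  shows "graded_submodule P K (loc \<tau> M) T"
proof -
  let ?L = "loc \<tau> M"
  have zT: "\<zero>\<^bsub>comp ?L q2\<^esub> \<in> T q2" for q2
  proof (cases "pleq P q q2")
    case True
    interpret A: module K "comp M q2" by (rule mods)
    have w: "smap M q q2 y \<in> Cr q2" by (rule sm_closed[OF True y])
    have "\<zero>\<^bsub>comp ?L q2\<^esub> = frac \<tau> M q2 0 (\<zero>\<^bsub>K\<^esub> \<odot>\<^bsub>comp M q2\<^esub> smap M q q2 y)"
      unfolding loc_zero using w by simp
    then show ?thesis unfolding T_def using True by auto
  next
    case False then show ?thesis unfolding T_def by simp
  qed
  have sub: "submodule (T q2) K (comp ?L q2)" for q2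
  proof (cases "pleq P q q2")
    case True
    interpret A: module K "comp M q2" by (rule mods)
    define w where "w = smap M q q2 y"
    have w: "w \<in> Cr q2" unfolding w_def by (rule sm_closed[OF True y])
    have Tq: "T q2 = {frac \<tau> M q2 0 (c \<odot>\<^bsub>comp M q2\<^esub> w) |c. c \<in> carrier K}" unfolding T_def w_def using True by simp
    show ?thesis
    proof (intro submodule.intro subgroup.intro submodule_axioms.intro)
      show "T q2 \<subseteq> carrier (add_monoid (comp ?L q2))" unfolding Tq using iota_carrier w by auto
    next
      fix a b assume a: "a \<in> T q2" and b: "b \<in> T q2"
      obtain c where c: "c \<in> carrier K" "a = frac \<tau> M q2 0 (c \<odot>\<^bsub>comp M q2\<^esub> w)" using a unfolding Tq by blast
      obtain d where d: "d \<in> carrier K" "b = frac \<tau> M q2 0 (d \<odot>\<^bsub>comp M q2\<^esub> w)" using b unfolding Tq by blast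
      have "a \<oplus>\<^bsub>comp ?L q2\<^esub> b = frac \<tau> M q2 0 ((c \<oplus>\<^bsub>K\<^esub> d) \<odot>\<^bsub>comp M q2\<^esub> w)"
        unfolding c(2) d(2) using iota_add[OF A.smult_closed[OF c(1) w] A.smult_closed[OF d(1) w]]
          A.smult_l_distr[OF c(1) d(1) w] by simp
      then show "a \<otimes>\<^bsub>add_monoid (comp ?L q2)\<^esub> b \<in> T q2" unfolding Tq using c d by auto
    next
      show "\<one>\<^bsub>add_monoid (comp ?L q2)\<^esub> \<in> T q2" using zT by simp
    next
      fix a assume a: "a \<in> T q2"
      obtain c where c: "c \<in> carrier K" "a = frac \<tau> M q2 0 (c \<odot>\<^bsub>comp M q2\<^esub> w)" using a unfolding Tq by blast
      have "inv\<^bsub>add_monoid (comp ?L q2)\<^esub> a = frac \<tau> M q2 0 ((\<ominus>\<^bsub>K\<^esub> c) \<odot>\<^bsub>comp M q2\<^esub> w)"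
        unfolding c(2) using iota_inv[OF A.smult_closed[OF c(1) w]] A.smult_l_minus[OF c(1) w] by simp
      then show "inv\<^bsub>add_monoid (comp ?L q2)\<^esub> a \<in> T q2" unfolding Tq using c by auto
    next
      fix e a assume e: "e \<in> carrier K" and a: "a \<in> T q2"
      obtain c where c: "c \<in> carrier K" "a = frac \<tau> M q2 0 (c \<odot>\<^bsub>comp M q2\<^esub> w)" using a unfolding Tq by blast
      have "e \<odot>\<^bsub>comp ?L q2\<^esub> a = frac \<tau> M q2 0 ((e \<otimes>\<^bsub>K\<^esub> c) \<odot>\<^bsub>comp M q2\<^esub> w)"
        unfolding c(2) using iota_smult[OF A.smult_closed[OF c(1) w] e] A.smult_assoc1[OF e c(1) w] by simp
      then show "e \<odot>\<^bsub>comp ?L q2\<^esub> a \<in> T q2" unfolding Tq using c e by auto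
    qed
  next
    case False
    have Tq: "T q2 = {\<zero>\<^bsub>comp ?L q2\<^esub>}" unfolding T_def using False by simp
    show ?thesis
    proof (intro submodule.intro subgroup.intro submodule_axioms.intro)
      show "T q2 \<subseteq> carrier (add_monoid (comp ?L q2))" unfolding Tq using zero_L_carrier by simp
    next
      fix a b assume "a \<in> T q2" "b \<in> T q2"
      then show "a \<otimes>\<^bsub>add_monoid (comp ?L q2)\<^esub> b \<in> T q2" unfolding Tq using zero_zero_L by simp
    next
      show "\<one>\<^bsub>add_monoid (comp ?L q2)\<^esub> \<in> T q2" using zT by simp
    next
      fix a assume "a \<in> T q2"
      then show "inv\<^bsub>add_monoid (comp ?L q2)\<^esub> a \<in> T q2" unfolding Tq using inv_zero_L by simp
    next
      fix e a assume "e \<in> carrier K" "a \<in> T q2"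
      then show "e \<odot>\<^bsub>comp ?L q2\<^esub> a \<in> T q2" unfolding Tq using smult_zero_L by simp
    qed
  qed
  have sm: "smap ?L q2 q3 a \<in> T q3" if p23: "pleq P q2 q3" and a: "a \<in> T q2" for q2 q3 a
  proof (cases "pleq P q q2")
    case True
    interpret A: module K "comp M q2" by (rule mods)
    have p3: "pleq P q q3" using True p23 pleq_trans by blast
    have w: "smap M q q2 y \<in> Cr q2" by (rule sm_closed[OF True y])
    obtain c where c: "c \<in> carrier K" "a = frac \<tau> M q2 0 (c \<odot>\<^bsub>comp M q2\<^esub> smap M q q2 y)"
      using a True unfolding T_def by auto
    have "smap ?L q2 q3 a = frac \<tau> M q3 0 (c \<odot>\<^bsub>comp M q3\<^esub> smap M q q3 y)"
      unfolding c(2) iota_smap[OF A.smult_closed[OF c(1) w] p23] sm_smult[OF p23 c(1) w] sm_comp[OF True p23 y] ..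
    then show ?thesis unfolding T_def using p3 c(1) by auto
  next
    case False
    then have "a = \<zero>\<^bsub>comp ?L q2\<^esub>" using a unfolding T_def by simp
    then show ?thesis using smapL_zero[OF p23] zT by simp
  qed
  show ?thesis unfolding graded_submodule_def using sub sm by blast
qed


lemma face_sigma: assumes f: "f \<in> P" shows "face P {x \<in> P. \<exists>n. pleq P x (ntimes n f)}"
  unfolding face_def submonoid_def
proof (intro conjI ballI)
  show "{x \<in> P. \<exists>n. pleq P x (ntimes n f)} \<subseteq> P" by blast
  show "0 \<in> {x \<in> P. \<exists>n. pleq P x (ntimes n f)}" using P0 pleq_refl[of 0] by (auto intro!: exI[of _ 0])
next
  fix a b assume a: "a \<in> {x \<in> P. \<exists>n. pleq P x (ntimes n f)}" and b: "b \<in> {x \<in> P. \<exists>n. pleq P x (ntimes n f)}"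
  obtain n where n: "pleq P a (ntimes n f)" using a by blast
  obtain m where m: "pleq P b (ntimes m f)" using b by blast
  have "ntimes (n+m) f - (a+b) = (ntimes n f - a) + (ntimes m f - b)" by (simp add: ntimes_add algebra_simps)
  then have "pleq P (a+b) (ntimes (n+m) f)" using n m Padd unfolding pleq_def by metis
  then show "a + b \<in> {x \<in> P. \<exists>n. pleq P x (ntimes n f)}" using a b Padd by blast
next
  fix a b assume a: "a \<in> P - {x \<in> P. \<exists>n. pleq P x (ntimes n f)}" and b: "b \<in> P"
  have "a + b \<in> P" using a b Padd by blast
  moreover have "\<not> pleq P (a+b) (ntimes n f)" for n
  proof
    assume "pleq P (a+b) (ntimes n f)"
    moreover have "ntimes n f - a = (ntimes n f - (a+b)) + b" by (simp add: algebra_simps)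
    ultimately have "pleq P a (ntimes n f)" using b Padd unfolding pleq_def by metis
    then show False using a by blast
  qed
  ultimately show "a + b \<in> P - {x \<in> P. \<exists>n. pleq P x (ntimes n f)}" by blast
qed

lemma smult_cancel: assumes c: "c \<in> carrier K" "c \<noteq> \<zero>\<^bsub>K\<^esub>" and x: "x \<in> Cr D"
  and e: "c \<odot>\<^bsub>comp M D\<^esub> x = \<zero>\<^bsub>comp M D\<^esub>" shows "x = \<zero>\<^bsub>comp M D\<^esub>"
proof -
  interpret F: field K by (rule fld)
  interpret A: module K "comp M D" by (rule mods)
  have cu: "c \<in> Units K" using c F.field_Units by blast
  have ic: "inv\<^bsub>K\<^esub> c \<in> carrier K" using cu by simp
  have "x = (inv\<^bsub>K\<^esub> c \<otimes>\<^bsub>K\<^esub> c) \<odot>\<^bsub>comp M D\<^esub> x" using cu x by simp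
  also have "\<dots> = inv\<^bsub>K\<^esub> c \<odot>\<^bsub>comp M D\<^esub> (c \<odot>\<^bsub>comp M D\<^esub> x)" by (rule A.smult_assoc1[OF ic c(1) x])
  also have "\<dots> = \<zero>\<^bsub>comp M D\<^esub>" unfolding e using ic by simp
  finally show ?thesis .
qed

lemma sum_tau: "finite F \<Longrightarrow> (\<forall>x\<in>F. hs x \<in> \<tau>) \<Longrightarrow> sum hs F \<in> \<tau>"
  by (induction rule: finite_induct) (simp_all add: t0 tadd)


lemma dir_fwd: assumes poly: "polyhedral P" and cm: "coprimary_module P K \<tau> M"
  and y: "y \<in> Cr q" and yne: "y \<noteq> \<zero>\<^bsub>comp M q\<^esub>"
  shows "\<exists>q' y'. divides P M q y q' y' \<and> coprimary_elem P \<tau> M q' y'"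
proof -
  let ?L = "loc \<tau> M"
  have inj: "inj_on (locmap \<tau> M q) (Cr q)" and ess: "essential P K ?L (Gamma P \<tau> ?L)"
    using cm unfolding coprimary_module_def by auto
  have iy: "frac \<tau> M q 0 y \<noteq> \<zero>\<^bsub>comp ?L q\<^esub>"
  proof
    assume "frac \<tau> M q 0 y = \<zero>\<^bsub>comp ?L q\<^esub>"
    then have "locmap \<tau> M q y = locmap \<tau> M q \<zero>\<^bsub>comp M q\<^esub>"
      unfolding locmap_eq[OF y] locmap_eq[OF zero_in] loc_zero .
    then show False using inj y zero_in yne unfolding inj_on_def by blast
  qed
  define T where "T \<equiv> (\<lambda>q2. if pleq P q q2 then {frac \<tau> M q2 0 (c \<odot>\<^bsub>comp M q2\<^esub> smap M q q2 y) |c. c \<in> carrier K}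
                 else {\<zero>\<^bsub>comp (loc \<tau> M) q2\<^esub>})"
  have gT: "graded_submodule P K ?L T" unfolding T_def by (rule span_sub[OF y])
  have "\<exists>q2. \<exists>Y\<in>T q2. Y \<noteq> \<zero>\<^bsub>comp ?L q2\<^esub>"
  proof -
    interpret A: module K "comp M q" by (rule mods)
    have "frac \<tau> M q 0 y \<in> T q" unfolding T_def using pleq_refl[of q] sm_id[OF y] y
      by (auto intro!: exI[of _ "\<one>\<^bsub>K\<^esub>"])
    then show ?thesis using iy by blast
  qed
  then obtain q2 Y where Y: "Y \<in> T q2" "Y \<in> Gamma P \<tau> ?L q2" "Y \<noteq> \<zero>\<^bsub>comp ?L q2\<^esub>"
    using ess gT unfolding essential_def by blast
  have pq: "pleq P q q2"
  proof (rule ccontr)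
    assume "\<not> pleq P q q2" then have "Y = \<zero>\<^bsub>comp ?L q2\<^esub>" using Y(1) unfolding T_def by simp
    then show False using Y(3) by simp
  qed
  interpret A2: module K "comp M q2" by (rule mods)
  define u where "u = smap M q q2 y"
  have uc: "u \<in> Cr q2" unfolding u_def by (rule sm_closed[OF pq y])
  obtain c where c: "c \<in> carrier K" "Y = frac \<tau> M q2 0 (c \<odot>\<^bsub>comp M q2\<^esub> u)"
    using Y(1) pq unfolding T_def u_def by auto
  define w where "w = c \<odot>\<^bsub>comp M q2\<^esub> u"
  have wc: "w \<in> Cr q2" unfolding w_def using c uc by simp
  have Yw: "Y = frac \<tau> M q2 0 w" using c(2) unfolding w_def .
  have cne: "c \<noteq> \<zero>\<^bsub>K\<^esub>"
  proof
    assume "c = \<zero>\<^bsub>K\<^esub>"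
    then have "w = \<zero>\<^bsub>comp M q2\<^esub>" unfolding w_def using uc by simp
    then have "Y = \<zero>\<^bsub>comp ?L q2\<^esub>" unfolding Yw loc_zero by simp
    then show False using Y(3) by simp
  qed
  have wu: "smap M q2 D u = \<zero>\<^bsub>comp M D\<^esub>" if D: "pleq P q2 D" "smap M q2 D w = \<zero>\<^bsub>comp M D\<^esub>" for D
  proof -
    have "c \<odot>\<^bsub>comp M D\<^esub> smap M q2 D u = \<zero>\<^bsub>comp M D\<^esub>" using D sm_smult[OF D(1) c(1) uc] unfolding w_def by simp
    then show ?thesis using smult_cancel[OF c(1) cne sm_closed[OF D(1) uc]] by blast
  qed
  have pers: "smap M q2 (q2+h) u \<noteq> \<zero>\<^bsub>comp M (q2+h)\<^esub>" if h: "h \<in> \<tau>" for h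
  proof
    assume z: "smap M q2 (q2+h) u = \<zero>\<^bsub>comp M (q2+h)\<^esub>"
    have ph: "pleq P q2 (q2+h)" by (rule tPle[OF h]) simp
    interpret B: module K "comp M (q2+h)" by (rule mods)
    have "smap M q2 (q2+h) w = \<zero>\<^bsub>comp M (q2+h)\<^esub>" unfolding w_def sm_smult[OF ph c(1) uc] z using c(1) by simp
    then have "Y = \<zero>\<^bsub>comp ?L q2\<^esub>" unfolding Yw iota_zero_iff[OF wc] using h by (intro exI[of _ "q2+h"]) simp
    then show False using Y(3) by simp
  qed
  define F where "F = {\<sigma>. face P \<sigma> \<and> \<not> \<sigma> \<subseteq> \<tau>}"
  have finF: "finite F" using poly unfolding polyhedral_def F_def by (rule rev_finite_subset) blast
  have kills: "\<exists>gh. fst gh \<in> \<sigma> \<and> snd gh \<in> \<tau> \<and> smap M q2 (q2 + fst gh + snd gh) u = \<zero>\<^bsub>comp M (q2 + fst gh + snd gh)\<^esub>"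
    if s: "\<sigma> \<in> F" for \<sigma>
  proof -
    obtain g where g: "g \<in> \<sigma>" "smap ?L q2 (q2+g) Y = \<zero>\<^bsub>comp ?L (q2+g)\<^esub>"
      using Y(2) s unfolding Gamma_iff F_def by blast
    have gP: "g \<in> P" using face_props s g unfolding F_def by blast
    have pg: "pleq P q2 (q2+g)" by (rule Ple[OF gP]) simp
    have wg: "smap M q2 (q2+g) w \<in> Cr (q2+g)" by (rule sm_closed[OF pg wc])
    have "frac \<tau> M (q2+g) 0 (smap M q2 (q2+g) w) = \<zero>\<^bsub>comp ?L (q2+g)\<^esub>"
      using g(2) unfolding Yw iota_smap[OF wc pg] .
    then obtain D where D: "D - (q2+g) \<in> \<tau>" "smap M (q2+g) D (smap M q2 (q2+g) w) = \<zero>\<^bsub>comp M D\<^esub>"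
      unfolding iota_zero_iff[OF wg] by blast
    have pD: "pleq P (q2+g) D" by (rule tPle[OF D(1)]) simp
    have pD2: "pleq P q2 D" using pg pD pleq_trans by blast
    have "smap M q2 D w = \<zero>\<^bsub>comp M D\<^esub>" using D(2) sm_comp[OF pg pD wc] by simp
    then have "smap M q2 D u = \<zero>\<^bsub>comp M D\<^esub>" using wu pD2 by blast
    moreover have "q2 + g + (D - (q2+g)) = D" by simp
    ultimately show ?thesis using g(1) D(1) by (intro exI[of _ "(g, D - (q2+g))"]) simp
  qed
  have ex: "\<forall>\<sigma>\<in>F. \<exists>gh. fst gh \<in> \<sigma> \<and> snd gh \<in> \<tau> \<and> smap M q2 (q2 + fst gh + snd gh) u = \<zero>\<^bsub>comp M (q2 + fst gh + snd gh)\<^esub>"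
    by (intro ballI kills)
  from bchoice[OF ex] obtain gh where gh: "\<forall>\<sigma>\<in>F. fst (gh \<sigma>) \<in> \<sigma> \<and> snd (gh \<sigma>) \<in> \<tau> \<and>
      smap M q2 (q2 + fst (gh \<sigma>) + snd (gh \<sigma>)) u = \<zero>\<^bsub>comp M (q2 + fst (gh \<sigma>) + snd (gh \<sigma>))\<^esub>" ..
  have ghs: "fst (gh \<sigma>) \<in> \<sigma> \<and> snd (gh \<sigma>) \<in> \<tau> \<and>
      smap M q2 (q2 + fst (gh \<sigma>) + snd (gh \<sigma>)) u = \<zero>\<^bsub>comp M (q2 + fst (gh \<sigma>) + snd (gh \<sigma>))\<^esub>"
    if "\<sigma> \<in> F" for \<sigma> using gh that by (rule bspec)
  define hs where "hs = (\<lambda>\<sigma>. snd (gh \<sigma>))"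
  define H where "H = sum hs F"
  have hst: "\<forall>\<sigma>\<in>F. hs \<sigma> \<in> \<tau>" unfolding hs_def using ghs by blast
  have Ht: "H \<in> \<tau>" unfolding H_def by (rule sum_tau[OF finF hst])
  have Hrem: "H - hs \<sigma> \<in> \<tau>" if "\<sigma> \<in> F" for \<sigma>
  proof -
    have "H = hs \<sigma> + sum hs (F - {\<sigma>})" unfolding H_def using sum.remove[OF finF that] .
    then have "H - hs \<sigma> = sum hs (F - {\<sigma>})" by (simp add: algebra_simps)
    moreover have "sum hs (F - {\<sigma>}) \<in> \<tau>" by (rule sum_tau) (use finF hst in auto)
    ultimately show ?thesis by simp
  qed
  define q' where "q' = q2 + H"
  define y' where "y' = smap M q q' y"
  have p2': "pleq P q2 q'" unfolding q'_def by (rule tPle[OF Ht]) simp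
  have pq': "pleq P q q'" using pq p2' pleq_trans by blast
  have y'c: "y' \<in> Cr q'" unfolding y'_def by (rule sm_closed[OF pq' y])
  have y'u: "smap M q' D y' = smap M q2 D u" if D: "pleq P q' D" for D
  proof -
    have "pleq P q2 D" using p2' D pleq_trans by blast
    then show ?thesis unfolding y'_def u_def using sm_comp[OF pq' D y] sm_comp[OF pq _ y] by simp
  qed
  have div: "divides P M q y q' y'" unfolding divides_def y'_def using pq' y sm_closed[OF pq' y] by simp
  have persist: "persistent \<tau> M q' y'" unfolding persistent_def
  proof
    fix f assume f: "f \<in> \<tau>"
    have pf: "pleq P q' (q'+f)" by (rule tPle[OF f]) simp
    have e: "q2 + (H + f) = q' + f" unfolding q'_def by (simp add: add.assoc)
    have A: "smap M q' (q'+f) y' = smap M q2 (q'+f) u" by (rule y'u[OF pf])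
    have B: "smap M q2 (q'+f) u \<noteq> \<zero>\<^bsub>comp M (q' + f)\<^esub>" using pers[OF tadd[OF Ht f]] unfolding e .
    show "smap M q' (q' + f) y' \<noteq> \<zero>\<^bsub>comp M (q' + f)\<^esub>"
      using A B by argo
  qed
  have trans: "transient P \<tau> M q' y'" unfolding transient_def
  proof
    fix f assume f: "f \<in> P - \<tau>"
    define \<sigma> where "\<sigma> = {x \<in> P. \<exists>n. pleq P x (ntimes n f)}"
    have fs: "face P \<sigma>" unfolding \<sigma>_def using face_sigma f by blast
    have "f \<in> \<sigma>" unfolding \<sigma>_def using f pleq_refl[of f] by (auto intro!: exI[of _ 1])
    then have sF: "\<sigma> \<in> F" unfolding F_def using fs f by blast
    define g where "g = fst (gh \<sigma>)"
    define h where "h = hs \<sigma>"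
    have G: "g \<in> \<sigma> \<and> h \<in> \<tau> \<and> smap M q2 (q2 + g + h) u = \<zero>\<^bsub>comp M (q2 + g + h)\<^esub>"
      unfolding g_def h_def hs_def by (rule ghs[OF sF])
    note g = conjunct1[OF G] and h = conjunct1[OF conjunct2[OF G]] and z = conjunct2[OF conjunct2[OF G]]
    obtain N where N: "pleq P g (ntimes N f)" and gP: "g \<in> P" using g unfolding \<sigma>_def by blast
    have "smap M q' (q' + ntimes n f) y' = \<zero>\<^bsub>comp M (q' + ntimes n f)\<^esub>" if n: "n \<ge> N" for n
    proof -
      have fP: "f \<in> P" using f by blast
      have nn: "ntimes n f = ntimes (n - N) f + ntimes N f" using ntimes_add[of "n-N" N f] n by simp
      have e: "q' + ntimes n f - (q2 + g + h) = (H - h) + ntimes (n - N) f + (ntimes N f - g)"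
        unfolding q'_def nn by (simp add: algebra_simps)
      have "(H - h) + ntimes (n - N) f + (ntimes N f - g) \<in> P"
      proof -
        have a1: "H - h \<in> P" unfolding h_def by (rule tP[OF Hrem[OF sF]])
        have a3: "ntimes N f - g \<in> P" using N unfolding pleq_def .
        show ?thesis by (rule Padd[OF Padd[OF a1 ntimes_P[OF fP]] a3])
      qed
      then have p1: "pleq P (q2 + g + h) (q' + ntimes n f)" unfolding pleq_def e .
      have ghP: "g + h \<in> P" using gP h tP Padd by blast
      have p0: "pleq P q2 (q2 + g + h)" by (rule Ple[OF ghP]) (simp add: algebra_simps)
      have pn: "pleq P q' (q' + ntimes n f)" by (rule Ple[OF ntimes_P[OF fP]]) simp
      have "smap M q' (q' + ntimes n f) y' = smap M q2 (q' + ntimes n f) u" by (rule y'u[OF pn])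
      also have "\<dots> = smap M (q2 + g + h) (q' + ntimes n f) (smap M q2 (q2 + g + h) u)"
        using sm_comp[OF p0 p1 uc] by simp
      also have "\<dots> = \<zero>\<^bsub>comp M (q' + ntimes n f)\<^esub>" unfolding z by (rule sm_zero[OF p1])
      finally show ?thesis .
    qed
    then show "\<exists>N. \<forall>n\<ge>N. smap M q' (q' + ntimes n f) y' = \<zero>\<^bsub>comp M (q' + ntimes n f)\<^esub>" by blast
  qed
  have "coprimary_elem P \<tau> M q' y'" unfolding coprimary_elem_def using y'c persist trans by blast
  then show ?thesis using div by blast
qed

end

theorem theorem4p13:
  fixes P :: "'q::ab_group_add set" and K :: "('k, 'z) ring_scheme"
    and \<tau> :: "'q set" and M :: "('q, 'k, 'v) qmodule"
  assumes "pogroup P" and "polyhedral P" and "closed_pog P"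
    and "face P \<tau>" and "field K" and "is_qmodule P K M"
  shows "coprimary_module P K \<tau> M \<longleftrightarrow>
    (\<forall>q y. y \<in> carrier (comp M q) \<and> y \<noteq> \<zero>\<^bsub>comp M q\<^esub> \<longrightarrow>
       (\<exists>q' y'. divides P M q y q' y' \<and> coprimary_elem P \<tau> M q' y'))"
proof -
  interpret qctx P K M \<tau> by (rule qctx.intro) (rule assms)+
  show ?thesis using qctx.dir_fwd[OF qctx_axioms assms(2)] dir_back by blast
qed

end
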